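(* $\Sigma=\bigcup_{n\ge0}(\mathcal S_n\cup\mathcal S'_n)=\mathcal S\cap\mathcal R^4$, where $\mathcal S$ is the unit sphere of $\mathbb{R}^4$.
   Context: Let $\tau=(1+\sqrt5)/2$, $\tau'=(1-\sqrt5)/2$, and $\mathcal R=\mathbb{Z}[\frac12,\tau]=\{(a+b\tau)/2^n: a,b\in\mathbb{Z},\ n\ge0\}$. Let $\Delta\subset\mathbb{R}^4$ be the set of 120 vectors consisting of: the 8 vectors obtained from $(\pm1,0,0,0)$ by permuting coordinates; the 16 vectors $\frac12(\pm1,\pm1,\pm1,\pm1)$; and the 96 vectors obtained from $\frac12(0,\pm1,\pm\tau',\pm\tau)$ (all sign choices) by even permutations of the coordinates. Let $\Delta'$ be the image of $\Delta$ under the Galois conjugation $\tau\leftrightarrow\tau'$ applied to each coordinate. For a unit vector $a$, $r_a(x)=x-2(x\cdot a)a$. Let $H^\infty$ be the group generated by all $r_a$, $a\in\Delta\cup\Delta'$, and $\Sigma=\{w(a): w\in H^\infty,\ a\in\Delta\cup\Delta'\}$. Let $\mathbb F_4=\mathbb{Z}[\tau]/2\mathbb{Z}[\tau]$, $\bar y$ the coordinatewise reduction of $y\in\mathbb{Z}[\tau]^4$, $A\subset\mathbb F_4^4$ the span of $(\bar1,\bar1,\bar1,\bar1)$ and $(\bar0,\bar1,\bar{\tau'},\bar\tau)$, $A'$ the span of $(\bar1,\bar1,\bar1,\bar1)$ and $(\bar0,\bar1,\bar\tau,\bar{\tau'})$. For $n\ge1$, $\mathcal S_n=\{x\in2^{-n}\mathbb{Z}[\tau]^4: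 x\cdot x=1,\ \overline{2^nx}\in A\setminus\{0\}\}$, $\mathcal S'_n$ likewise with $A'$; and $\mathcal S_0=\mathcal S'_0$ is the set of 8 vectors obtained from $(\pm1,0,0,0)$ by permuting coordinates. *)

theory Defs
  imports "HOL-Analysis.Analysis" "HOL-Combinatorics.Permutations"
begin

definition tau :: real where "tau = (1 + sqrt 5) / 2"
definition tau' :: real where "tau' = (1 - sqrt 5) / 2"

definition Ztau :: "real set" where
  "Ztau = {of_int a + of_int b * tau | a b. True}"

definition Rring :: "real set" where
  "Rring = {(of_int a + of_int b * tau) / 2 ^ n | a b n. True}"

definition refl :: "real^4 \<Rightarrow> real^4 \<Rightarrow> real^4" where
  "refl a x = x - (2 * (x \<bullet> a)) *\<^sub>R a"

text \<open>The 120-vector configuration built with the pair (t,t'); Delta uses (tau,tau'),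
  its Galois conjugate Delta' uses (tau',tau) (conjugation fixes the rational entries).\<close>
definition DeltaGen :: "real \<Rightarrow> real \<Rightarrow> (real^4) set" where
  "DeltaGen t t' =
     {x. \<exists>i s. s \<in> {-1, 1} \<and> x = (\<chi> j. if j = i then s else 0)}
   \<union> {x. \<forall>j. x $ j \<in> {-1/2, 1/2}}
   \<union> {x. \<exists>p s. p permutes (UNIV :: 4 set) \<and> evenperm p \<and> (\<forall>j. s j \<in> {-1::real, 1}) \<and>
          x = (\<chi> j. s j * ((vector [0, 1/2, t'/2, t/2] :: real^4) $ p j))}"

definition Delta :: "(real^4) set" where "Delta = DeltaGen tau tau'"
definition Delta' :: "(real^4) set" where "Delta' = DeltaGen tau' tau"

text \<open>H^infinity: the group generated by the reflections r_a, a in Delta \<union> Delta'.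
  Since the generators are involutions, the generated monoid is the generated group.\<close>
inductive_set Hinf :: "(real^4 \<Rightarrow> real^4) set" where
  Hinf_id: "id \<in> Hinf"
| Hinf_step: "w \<in> Hinf \<Longrightarrow> a \<in> Delta \<union> Delta' \<Longrightarrow> refl a \<circ> w \<in> Hinf"

definition Sigma :: "(real^4) set" where
  "Sigma = {w a | w a. w \<in> Hinf \<and> a \<in> Delta \<union> Delta'}"

text \<open>Congruence modulo 2 Z[tau]^4: y and z have the same coordinatewise reduction in F_4 = Z[tau]/2Z[tau].\<close>
definition cong2 :: "real^4 \<Rightarrow> real^4 \<Rightarrow> bool" where
  "cong2 y z \<longleftrightarrow> (\<forall>i. (y $ i - z $ i) / 2 \<in> Ztau)"

text \<open>For y in Z[tau]^4: the reduction of y lies in the F_4-span of (1,1,1,1) and (0,1,t',t),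
  and is nonzero. (F_4-scalars are lifted to Z[tau].)\<close>
definition inAred :: "real \<Rightarrow> real \<Rightarrow> real^4 \<Rightarrow> bool" where
  "inAred t t' y \<longleftrightarrow>
     (\<exists>\<alpha>\<in>Ztau. \<exists>\<beta>\<in>Ztau. cong2 y (\<alpha> *\<^sub>R vector [1,1,1,1] + \<beta> *\<^sub>R vector [0,1,t',t]))
     \<and> \<not> cong2 y 0"

definition S0 :: "(real^4) set" where
  "S0 = {x. \<exists>i s. s \<in> {-1, 1} \<and> x = (\<chi> j. if j = i then s else 0)}"

definition SGen :: "real \<Rightarrow> real \<Rightarrow> nat \<Rightarrow> (real^4) set" where
  "SGen t t' n = (if n = 0 then S0 else
     {x. (\<forall>i. 2 ^ n * x $ i \<in> Ztau) \<and> x \<bullet> x = 1 \<and> inAred t t' ((2 ^ n) *\<^sub>R x)})"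

definition S :: "nat \<Rightarrow> (real^4) set" where "S n = SGen tau tau' n"
definition S' :: "nat \<Rightarrow> (real^4) set" where "S' n = SGen tau' tau n"

end

theory Submission
  imports Defs
begin

lemma sqrt5_sq: "sqrt 5 * sqrt 5 = (5::real)" by simp

lemma tau_sq: "tau * tau = tau + 1"
  unfolding tau_def by (simp add: field_simps)

lemma tau'_eq: "tau' = 1 - tau"
  unfolding tau_def tau'_def by (simp add: field_simps)

lemma sq_mod5: "((m::int)^2) mod 5 = 0 \<Longrightarrow> m mod 5 = 0"
proof -
  assume h: "m^2 mod 5 = 0"
  have "m^2 mod 5 = ((m mod 5)^2) mod 5" by (simp add: power_mod)
  moreover have "m mod 5 \<in> {0,1,2,3,4}" by auto
  ultimately show ?thesis using h by auto
qed

lemma no_sqrt5_int: "(m::int)^2 = 5 * n^2 \<Longrightarrow> n = 0"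
proof (induction "nat \<bar>n\<bar>" arbitrary: m n rule: less_induct)
  case less
  show ?case
  proof (rule ccontr)
    assume n0: "n \<noteq> 0"
    have "m^2 mod 5 = 0" using less.prems by simp
    then have "m mod 5 = 0" by (rule sq_mod5)
    then obtain k where k: "m = 5 * k" by (metis mult_div_mod_eq add_0_right mult.commute)
    have "n^2 = 5 * k^2" using less.prems k by (simp add: power_mult_distrib)
    then have "n mod 5 = 0" using sq_mod5 by simp
    then obtain j where j: "n = 5 * j" by (metis mult_div_mod_eq add_0_right mult.commute)
    have kj: "k^2 = 5 * j^2" using \<open>n^2 = 5 * k^2\<close> j by (simp add: power_mult_distrib)
    have "nat \<bar>j\<bar> < nat \<bar>n\<bar>" using j n0 by auto
    from less.hyps[OF this kj] have "j = 0" .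
    with j n0 show False by simp
  qed
qed

lemma sqrt5_irrat: "sqrt 5 \<notin> \<rat>"
proof
  assume h5: "sqrt 5 \<in> \<rat>"
  obtain m n :: int where nz: "n \<noteq> 0" and e: "sqrt 5 = of_int m / of_int n"
  proof (rule Rats_cases'[OF h5])
    fix a b :: int assume "b > 0" "coprime a b" "sqrt 5 = of_int a / of_int b"
    then show thesis using that[of b a] by simp
  qed
  have "(of_int m / of_int n)^2 = (5::real)" using e[symmetric] by simp
  then have "(of_int m)^2 = (5::real) * (of_int n)^2" using nz by (simp add: field_simps)
  then have "of_int (m^2) = (of_int (5 * n^2) :: real)" by simp
  then have "m^2 = 5 * n^2" by (simp only: of_int_eq_iff)
  then show False using no_sqrt5_int nz by blast
qed

type_synonym zt = "int \<times> int"
type_synonym zv = "zt \<times> zt \<times> zt \<times> zt"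

definition rv :: "zt \<Rightarrow> real" where "rv p = of_int (fst p) + of_int (snd p) * tau"

lemma rv_zero_iff: "rv (a,b) = 0 \<longleftrightarrow> a = 0 \<and> b = 0"
proof
  assume h: "rv (a,b) = 0"
  have "b = 0"
  proof (rule ccontr)
    assume b0: "b \<noteq> 0"
    have "of_int a + of_int b * (1 + sqrt 5)/2 = (0::real)" using h by (simp add: rv_def tau_def)
    then have "sqrt 5 = - (2 * of_int a + of_int b) / of_int b" using b0 by (simp add: field_simps)
    also have "\<dots> \<in> \<rat>" by simp
    finally show False using sqrt5_irrat by simp
  qed
  then show "a = 0 \<and> b = 0" using h by (simp add: rv_def)
qed (simp add: rv_def)

lemma rv_inj: "rv p = rv q \<Longrightarrow> p = q"
proof -
  assume h: "rv p = rv q"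
  obtain a b c d where pq: "p = (a,b)" "q = (c,d)" by (cases p, cases q)
  have "rv (a - c, b - d) = 0" using h pq by (simp add: rv_def algebra_simps)
  then show ?thesis using pq rv_zero_iff by auto
qed

fun zadd :: "zt \<Rightarrow> zt \<Rightarrow> zt" where "zadd (a,b) (c,d) = (a+c, b+d)"
fun zsub :: "zt \<Rightarrow> zt \<Rightarrow> zt" where "zsub (a,b) (c,d) = (a-c, b-d)"
fun zmul :: "zt \<Rightarrow> zt \<Rightarrow> zt" where "zmul (a,b) (c,d) = (a*c + b*d, a*d + b*c + b*d)"
fun zhalf :: "zt \<Rightarrow> zt" where "zhalf (a,b) = (a div 2, b div 2)"
fun m2 :: "zt \<Rightarrow> zt" where "m2 (a,b) = (a mod 2, b mod 2)"
fun evz :: "zt \<Rightarrow> bool" where "evz (a,b) = (even a \<and> even b)"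

lemma rv_add: "rv (zadd p q) = rv p + rv q"
  by (cases p, cases q) (simp add: rv_def algebra_simps)
lemma rv_sub: "rv (zsub p q) = rv p - rv q"
  by (cases p, cases q) (simp add: rv_def algebra_simps)
lemma rv_mul: "rv (zmul p q) = rv p * rv q"
proof (cases p, cases q)
  fix a b c d assume pq: "p = (a,b)" "q = (c,d)"
  have "rv p * rv q = of_int (a*c) + of_int (a*d + b*c) * tau + of_int (b*d) * (tau*tau)"
    using pq by (simp add: rv_def algebra_simps)
  also have "\<dots> = rv (zmul p q)" using pq by (simp add: rv_def tau_sq algebra_simps)
  finally show ?thesis by simp
qed

lemma Ztau_iff: "r \<in> Ztau \<longleftrightarrow> (\<exists>p. r = rv p)"
  unfolding Ztau_def rv_def by force

lemma rv_Ztau[simp]: "rv p \<in> Ztau" using Ztau_iff by blast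

lemma Ztau_add: "x \<in> Ztau \<Longrightarrow> y \<in> Ztau \<Longrightarrow> x + y \<in> Ztau"
  by (metis Ztau_iff rv_add)
lemma Ztau_sub: "x \<in> Ztau \<Longrightarrow> y \<in> Ztau \<Longrightarrow> x - y \<in> Ztau"
  by (metis Ztau_iff rv_sub)
lemma Ztau_mul: "x \<in> Ztau \<Longrightarrow> y \<in> Ztau \<Longrightarrow> x * y \<in> Ztau"
  by (metis Ztau_iff rv_mul)
lemma Ztau_of_int[simp]: "of_int k \<in> Ztau"
  using Ztau_iff[of "of_int k"] by (metis add.right_neutral mult_zero_left of_int_0 prod.sel rv_def)
lemma Ztau_0[simp]: "0 \<in> Ztau" using Ztau_of_int[of 0] by simp
lemma Ztau_1[simp]: "1 \<in> Ztau" using Ztau_of_int[of 1] by simp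
lemma Ztau_2[simp]: "2 \<in> Ztau" using Ztau_of_int[of 2] by simp
lemma Ztau_tau[simp]: "tau \<in> Ztau" using Ztau_iff[of tau] rv_def
  by (metis add_0 fst_conv mult_1 of_int_0 of_int_1 snd_conv)
lemma Ztau_uminus: "x \<in> Ztau \<Longrightarrow> - x \<in> Ztau" using Ztau_sub[of 0 x] by simp
lemma Ztau_pow: "x \<in> Ztau \<Longrightarrow> x ^ n \<in> Ztau"
  by (induction n) (auto intro: Ztau_mul)
lemma Ztau_sum: "(\<And>i. i \<in> A \<Longrightarrow> f i \<in> Ztau) \<Longrightarrow> sum f A \<in> Ztau"
  by (induction A rule: infinite_finite_induct) (auto intro: Ztau_add)

lemma rv_div: assumes "m \<noteq> 0" shows "rv p / of_int m \<in> Ztau \<longleftrightarrow> m dvd fst p \<and> m dvd snd p"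
proof
  assume "rv p / of_int m \<in> Ztau"
  then obtain q where q: "rv p / of_int m = rv q" using Ztau_iff by blast
  obtain c d where q2: "q = (c,d)" by (cases q)
  have "rv p = rv (m*c, m*d)" using q q2 assms by (simp add: rv_def field_simps)
  then have "p = (m*c, m*d)" by (rule rv_inj)
  then show "m dvd fst p \<and> m dvd snd p" by auto
next
  assume "m dvd fst p \<and> m dvd snd p"
  then obtain a b where "fst p = m * a" "snd p = m * b" by (auto elim!: dvdE)
  then have "rv p / of_int m = rv (a,b)" using assms by (simp add: rv_def field_simps)
  then show "rv p / of_int m \<in> Ztau" by simp
qed

lemma rv_div2: "rv p / 2 \<in> Ztau \<longleftrightarrow> evz p"
  using rv_div[of 2 p] by (cases p) auto

lemma rv_div4: "rv p / 4 \<in> Ztau \<longleftrightarrow> 4 dvd fst p \<and> 4 dvd snd p"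
  using rv_div[of 4 p] by auto

definition O4 :: "real^4 \<Rightarrow> bool" where "O4 v \<longleftrightarrow> (\<forall>i. v$i \<in> Ztau)"

lemma vector4_nth[simp]:
  "(vector [a,b,c,d] :: 'a::zero^4) $ 1 = a"
  "(vector [a,b,c,d] :: 'a::zero^4) $ 2 = b"
  "(vector [a,b,c,d] :: 'a::zero^4) $ 3 = c"
  "(vector [a,b,c,d] :: 'a::zero^4) $ 4 = d"
  by (simp_all add: vector_def)

lemma vec4_eq: "(x::'a::zero^4) = vector [x$1,x$2,x$3,x$4]"
  by (simp add: vec_eq_iff forall_4)

lemma vec4_eq_iff: "(x::'a::zero^4) = y \<longleftrightarrow> x$1 = y$1 \<and> x$2 = y$2 \<and> x$3 = y$3 \<and> x$4 = y$4"
  by (simp add: vec_eq_iff forall_4)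

lemma inner4: "(x::real^4) \<bullet> y = x$1*y$1 + x$2*y$2 + x$3*y$3 + x$4*y$4"
  by (simp add: inner_vec_def sum_4)

fun rvec :: "zv \<Rightarrow> real^4" where "rvec (a,b,c,d) = vector [rv a, rv b, rv c, rv d]"
fun zdot :: "zv \<Rightarrow> zv \<Rightarrow> zt" where
  "zdot (a1,a2,a3,a4) (b1,b2,b3,b4) = zadd (zadd (zmul a1 b1) (zmul a2 b2)) (zadd (zmul a3 b3) (zmul a4 b4))"
fun vadd :: "zv \<Rightarrow> zv \<Rightarrow> zv" where
  "vadd (a1,a2,a3,a4) (b1,b2,b3,b4) = (zadd a1 b1, zadd a2 b2, zadd a3 b3, zadd a4 b4)"
fun vsub :: "zv \<Rightarrow> zv \<Rightarrow> zv" where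
  "vsub (a1,a2,a3,a4) (b1,b2,b3,b4) = (zsub a1 b1, zsub a2 b2, zsub a3 b3, zsub a4 b4)"
fun vsmul :: "zt \<Rightarrow> zv \<Rightarrow> zv" where
  "vsmul c (a1,a2,a3,a4) = (zmul c a1, zmul c a2, zmul c a3, zmul c a4)"
fun m2v :: "zv \<Rightarrow> zv" where "m2v (a1,a2,a3,a4) = (m2 a1, m2 a2, m2 a3, m2 a4)"
fun d2v :: "zv \<Rightarrow> zv" where "d2v (a1,a2,a3,a4) = (zhalf a1, zhalf a2, zhalf a3, zhalf a4)"
fun evv :: "zv \<Rightarrow> bool" where "evv (a1,a2,a3,a4) = (evz a1 \<and> evz a2 \<and> evz a3 \<and> evz a4)"

lemma rvec_nth[simp]: "rvec (a,b,c,d) $ 1 = rv a" "rvec (a,b,c,d) $ 2 = rv b"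
  "rvec (a,b,c,d) $ 3 = rv c" "rvec (a,b,c,d) $ 4 = rv d" by simp_all

lemma rvec_dot: "rvec p \<bullet> rvec q = rv (zdot p q)"
proof -
  obtain a b c d where p: "p = (a,b,c,d)" by (cases p)
  obtain e f g h where q: "q = (e,f,g,h)" by (cases q)
  show ?thesis unfolding p q by (simp add: inner4 rv_add rv_mul)
qed

lemma rvec_add: "rvec (vadd p q) = rvec p + rvec q"
proof -
  obtain a b c d where p: "p = (a,b,c,d)" by (cases p)
  obtain e f g h where q: "q = (e,f,g,h)" by (cases q)
  show ?thesis unfolding p q by (simp add: vec4_eq_iff rv_add)
qed
lemma rvec_sub: "rvec (vsub p q) = rvec p - rvec q"
proof -
  obtain a b c d where p: "p = (a,b,c,d)" by (cases p)
  obtain e f g h where q: "q = (e,f,g,h)" by (cases q)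
  show ?thesis unfolding p q by (simp add: vec4_eq_iff rv_sub)
qed
lemma rvec_smul: "rvec (vsmul c p) = rv c *\<^sub>R rvec p"
proof -
  obtain a b d e where p: "p = (a,b,d,e)" by (cases p)
  show ?thesis unfolding p by (simp add: vec4_eq_iff rv_mul)
qed

lemma O4_rvec[simp]: "O4 (rvec p)"
proof -
  obtain a b c d where p: "p = (a,b,c,d)" by (cases p)
  show ?thesis unfolding p O4_def forall_4 by simp
qed

lemma O4_iff: "O4 v \<longleftrightarrow> (\<exists>p. v = rvec p)"
proof
  assume "O4 v"
  then have "\<forall>i. \<exists>p. v$i = rv p" using Ztau_iff O4_def by blast
  then obtain f where f: "\<And>i. v$i = rv (f i)" by metis
  have "v = rvec (f 1, f 2, f 3, f 4)" by (simp add: vec4_eq_iff f)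
  then show "\<exists>p. v = rvec p" by blast
next
  assume "\<exists>p. v = rvec p"
  then show "O4 v" by (metis O4_rvec)
qed

lemma O4_add: "O4 x \<Longrightarrow> O4 y \<Longrightarrow> O4 (x + y)" by (auto simp: O4_def intro: Ztau_add)
lemma O4_sub: "O4 x \<Longrightarrow> O4 y \<Longrightarrow> O4 (x - y)" by (auto simp: O4_def intro: Ztau_sub)
lemma O4_scale: "c \<in> Ztau \<Longrightarrow> O4 x \<Longrightarrow> O4 (c *\<^sub>R x)" by (auto simp: O4_def intro: Ztau_mul)
lemma O4_inner: "O4 x \<Longrightarrow> O4 y \<Longrightarrow> x \<bullet> y \<in> Ztau"
  by (auto simp: O4_def inner_vec_def intro!: Ztau_sum Ztau_mul)

lemma O4_half_rvec: "O4 ((1/2) *\<^sub>R rvec p) \<longleftrightarrow> evv p"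
proof -
  obtain a b c d where p: "p = (a,b,c,d)" by (cases p)
  have "O4 ((1/2) *\<^sub>R rvec p) \<longleftrightarrow> rv a / 2 \<in> Ztau \<and> rv b / 2 \<in> Ztau \<and> rv c / 2 \<in> Ztau \<and> rv d / 2 \<in> Ztau"
    unfolding O4_def forall_4 p by simp
  then show ?thesis using p by (simp add: rv_div2)
qed

lemma zt_split: "rv p = rv (m2 p) + 2 * rv (zhalf p)"
proof (cases p)
  case (Pair a b)
  have ha: "(of_int a::real) = of_int (a mod 2) + 2 * of_int (a div 2)"
  proof -
    have "a = a mod 2 + 2 * (a div 2)" by simp
    then have "(of_int a::real) = of_int (a mod 2 + 2 * (a div 2))" by (rule arg_cong)
    then show ?thesis by (simp only: of_int_add of_int_mult of_int_numeral)
  qed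
  have hb: "(of_int b::real) = of_int (b mod 2) + 2 * of_int (b div 2)"
  proof -
    have "b = b mod 2 + 2 * (b div 2)" by simp
    then have "(of_int b::real) = of_int (b mod 2 + 2 * (b div 2))" by (rule arg_cong)
    then show ?thesis by (simp only: of_int_add of_int_mult of_int_numeral)
  qed
  show ?thesis using Pair by (simp add: rv_def) (subst ha, subst hb, simp add: algebra_simps)
qed

lemma rvec_split: "rvec p = rvec (m2v p) + 2 *\<^sub>R rvec (d2v p)"
proof -
  obtain a b c d where p: "p = (a,b,c,d)" by (cases p)
  show ?thesis unfolding p by (simp add: vec4_eq_iff zt_split[of a] zt_split[of b] zt_split[of c] zt_split[of d])
qed

lemma m2_reps: "m2 p \<in> {(0,0),(1,0),(0,1),(1,1)}"
proof (cases p)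
  case (Pair a b)
  have "a mod 2 = 0 \<or> a mod 2 = 1" "b mod 2 = 0 \<or> b mod 2 = 1" by auto
  then show ?thesis using Pair by auto
qed

lemma m2_eq_if_even_diff: "evz (zsub p q) \<Longrightarrow> m2 p = m2 q"
  by (cases p, cases q) (simp add: mod_eq_dvd_iff)

definition reps :: "zt list" where "reps = [(0,0),(1,0),(0,1),(1,1)]"
definition onesv :: zv where "onesv = ((1,0),(1,0),(1,0),(1,0))"
definition uA :: zv where "uA = ((0,0),(1,0),(1,-1),(0,1))"
definition uA' :: zv where "uA' = ((0,0),(1,0),(0,1),(1,-1))"
definition spanl :: "zv list" where "spanl = map (\<lambda>c. (c,c,c,c)) reps"
definition allq :: "zv list" where "allq = [(a,b,c,d). a\<leftarrow>reps, b\<leftarrow>reps, c\<leftarrow>reps, d\<leftarrow>reps]"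
definition pairs :: "(zt \<times> zt) list" where "pairs = List.product reps reps"
definition allB :: "zv list" where "allB = [((-1,0),(0,0),(0,-1),(1,-1)),
  ((-1,0),(0,-1),(-1,1),(0,0)),
  ((-1,0),(0,0),(1,-1),(0,-1)),
  ((0,0),(-1,0),(0,1),(-1,1)),
  ((-1,0),(0,0),(0,1),(1,-1)),
  ((-1,0),(-1,1),(0,0),(0,1)),
  ((-1,0),(0,0),(0,-1),(-1,1)),
  ((-1,0),(0,0),(1,-1),(0,1)),
  ((0,0),(-1,0),(-1,1),(0,1)),
  ((-1,0),(1,-1),(0,0),(0,-1)),
  ((0,0),(-1,0),(1,-1),(0,1)),
  ((-1,0),(1,-1),(0,0),(0,1)),
  ((-1,0),(0,-1),(0,0),(1,-1)),
  ((-1,0),(0,0),(-1,1),(0,1)),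
  ((-1,0),(-1,1),(0,1),(0,0)),
  ((-1,0),(0,1),(-1,1),(0,0)),
  ((-1,0),(-1,1),(0,0),(0,-1)),
  ((0,0),(-1,0),(1,-1),(0,-1)),
  ((-1,0),(-1,0),(-1,0),(-1,0)),
  ((-1,0),(1,-1),(0,-1),(0,0)),
  ((0,0),(-1,0),(0,1),(1,-1)),
  ((-1,0),(0,0),(0,1),(-1,1)),
  ((-1,0),(1,-1),(0,1),(0,0)),
  ((-1,0),(0,-1),(1,-1),(0,0)),
  ((-1,0),(-1,1),(0,-1),(0,0)),
  ((-1,0),(0,1),(1,-1),(0,0)),
  ((-1,0),(0,1),(0,0),(1,-1)),
  ((-1,0),(0,0),(-1,1),(0,-1)),
  ((0,0),(-1,0),(-1,1),(0,-1)),
  ((-1,0),(0,1),(0,0),(-1,1)),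
  ((0,0),(-1,0),(0,-1),(-1,1)),
  ((-1,0),(-1,0),(-1,0),(1,0)),
  ((-1,0),(0,-1),(0,0),(-1,1)),
  ((0,0),(-1,0),(0,-1),(1,-1))]"

definition wtab :: "(zv \<times> zv \<times> (zt \<times> zt \<times> (zv \<times> zt \<times> zt \<times> nat)) list) list" where
  "wtab = [(((0,0),(1,0),(0,1),(1,1)),((0,0),(1,0),(0,1),(1,-1)),[((0,0),(0,0),(((0,0),(-1,0),(0,-1),(-1,1)),(0,0),(1,0),1)),
    ((0,0),(1,0),(((0,0),(-1,0),(0,1),(1,-1)),(0,0),(1,0),1)),
    ((0,0),(0,1),(((0,0),(-1,0),(0,-1),(1,-1)),(0,0),(1,0),1)),
    ((0,0),(1,1),(((0,0),(-1,0),(0,1),(-1,1)),(0,0),(1,0),1)),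
    ((1,0),(0,0),(((0,0),(-1,0),(0,-1),(-1,1)),(0,0),(1,0),1)),
    ((1,0),(1,0),(((0,0),(-1,0),(0,1),(1,-1)),(0,0),(1,0),1)),
    ((1,0),(0,1),(((0,0),(-1,0),(0,-1),(1,-1)),(0,0),(1,0),1)),
    ((1,0),(1,1),(((0,0),(-1,0),(0,1),(-1,1)),(0,0),(1,0),1)),
    ((0,1),(0,0),(((0,0),(-1,0),(0,-1),(-1,1)),(0,0),(1,0),1)),
    ((0,1),(1,0),(((0,0),(-1,0),(0,1),(1,-1)),(0,0),(1,0),1)),
    ((0,1),(0,1),(((0,0),(-1,0),(0,-1),(1,-1)),(0,0),(1,0),1)),
    ((0,1),(1,1),(((0,0),(-1,0),(0,1),(-1,1)),(0,0),(1,0),1)),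
    ((1,1),(0,0),(((0,0),(-1,0),(0,-1),(-1,1)),(0,0),(1,0),1)),
    ((1,1),(1,0),(((0,0),(-1,0),(0,1),(1,-1)),(0,0),(1,0),1)),
    ((1,1),(0,1),(((0,0),(-1,0),(0,-1),(1,-1)),(0,0),(1,0),1)),
    ((1,1),(1,1),(((0,0),(-1,0),(0,1),(-1,1)),(0,0),(1,0),1))]),
  (((0,0),(1,0),(1,1),(0,1)),((0,0),(1,0),(1,-1),(0,1)),[((0,0),(0,0),(((0,0),(-1,0),(-1,1),(0,-1)),(0,0),(1,0),1)),
    ((0,0),(1,0),(((0,0),(-1,0),(1,-1),(0,1)),(0,0),(1,0),1)),
    ((0,0),(0,1),(((0,0),(-1,0),(1,-1),(0,-1)),(0,0),(1,0),1)),
    ((0,0),(1,1),(((0,0),(-1,0),(-1,1),(0,1)),(0,0),(1,0),1)),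
    ((1,0),(0,0),(((0,0),(-1,0),(-1,1),(0,-1)),(0,0),(1,0),1)),
    ((1,0),(1,0),(((0,0),(-1,0),(1,-1),(0,1)),(0,0),(1,0),1)),
    ((1,0),(0,1),(((0,0),(-1,0),(1,-1),(0,-1)),(0,0),(1,0),1)),
    ((1,0),(1,1),(((0,0),(-1,0),(-1,1),(0,1)),(0,0),(1,0),1)),
    ((0,1),(0,0),(((0,0),(-1,0),(-1,1),(0,-1)),(0,0),(1,0),1)),
    ((0,1),(1,0),(((0,0),(-1,0),(1,-1),(0,1)),(0,0),(1,0),1)),
    ((0,1),(0,1),(((0,0),(-1,0),(1,-1),(0,-1)),(0,0),(1,0),1)),
    ((0,1),(1,1),(((0,0),(-1,0),(-1,1),(0,1)),(0,0),(1,0),1)),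
    ((1,1),(0,0),(((0,0),(-1,0),(-1,1),(0,-1)),(0,0),(1,0),1)),
    ((1,1),(1,0),(((0,0),(-1,0),(1,-1),(0,1)),(0,0),(1,0),1)),
    ((1,1),(0,1),(((0,0),(-1,0),(1,-1),(0,-1)),(0,0),(1,0),1)),
    ((1,1),(1,1),(((0,0),(-1,0),(-1,1),(0,1)),(0,0),(1,0),1))]),
  (((0,0),(0,1),(1,0),(1,1)),((0,0),(1,0),(1,-1),(0,1)),[((0,0),(0,0),(((0,0),(-1,0),(-1,1),(0,1)),(0,0),(1,0),1)),
    ((0,0),(1,0),(((0,0),(-1,0),(-1,1),(0,-1)),(0,0),(1,0),1)),
    ((0,0),(0,1),(((0,0),(-1,0),(1,-1),(0,-1)),(0,0),(1,0),1)),
    ((0,0),(1,1),(((0,0),(-1,0),(1,-1),(0,1)),(0,0),(1,0),1)),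
    ((1,0),(0,0),(((0,0),(-1,0),(-1,1),(0,1)),(0,0),(1,0),1)),
    ((1,0),(1,0),(((0,0),(-1,0),(-1,1),(0,-1)),(0,0),(1,0),1)),
    ((1,0),(0,1),(((0,0),(-1,0),(1,-1),(0,-1)),(0,0),(1,0),1)),
    ((1,0),(1,1),(((0,0),(-1,0),(1,-1),(0,1)),(0,0),(1,0),1)),
    ((0,1),(0,0),(((0,0),(-1,0),(-1,1),(0,1)),(0,0),(1,0),1)),
    ((0,1),(1,0),(((0,0),(-1,0),(-1,1),(0,-1)),(0,0),(1,0),1)),
    ((0,1),(0,1),(((0,0),(-1,0),(1,-1),(0,-1)),(0,0),(1,0),1)),
    ((0,1),(1,1),(((0,0),(-1,0),(1,-1),(0,1)),(0,0),(1,0),1)),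
    ((1,1),(0,0),(((0,0),(-1,0),(-1,1),(0,1)),(0,0),(1,0),1)),
    ((1,1),(1,0),(((0,0),(-1,0),(-1,1),(0,-1)),(0,0),(1,0),1)),
    ((1,1),(0,1),(((0,0),(-1,0),(1,-1),(0,-1)),(0,0),(1,0),1)),
    ((1,1),(1,1),(((0,0),(-1,0),(1,-1),(0,1)),(0,0),(1,0),1))]),
  (((0,0),(0,1),(1,1),(1,0)),((0,0),(1,0),(0,1),(1,-1)),[((0,0),(0,0),(((0,0),(-1,0),(0,1),(-1,1)),(0,0),(1,0),1)),
    ((0,0),(1,0),(((0,0),(-1,0),(0,-1),(-1,1)),(0,0),(1,0),1)),
    ((0,0),(0,1),(((0,0),(-1,0),(0,-1),(1,-1)),(0,0),(1,0),1)),
    ((0,0),(1,1),(((0,0),(-1,0),(0,1),(1,-1)),(0,0),(1,0),1)),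
    ((1,0),(0,0),(((0,0),(-1,0),(0,1),(-1,1)),(0,0),(1,0),1)),
    ((1,0),(1,0),(((0,0),(-1,0),(0,-1),(-1,1)),(0,0),(1,0),1)),
    ((1,0),(0,1),(((0,0),(-1,0),(0,-1),(1,-1)),(0,0),(1,0),1)),
    ((1,0),(1,1),(((0,0),(-1,0),(0,1),(1,-1)),(0,0),(1,0),1)),
    ((0,1),(0,0),(((0,0),(-1,0),(0,1),(-1,1)),(0,0),(1,0),1)),
    ((0,1),(1,0),(((0,0),(-1,0),(0,-1),(-1,1)),(0,0),(1,0),1)),
    ((0,1),(0,1),(((0,0),(-1,0),(0,-1),(1,-1)),(0,0),(1,0),1)),
    ((0,1),(1,1),(((0,0),(-1,0),(0,1),(1,-1)),(0,0),(1,0),1)),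
    ((1,1),(0,0),(((0,0),(-1,0),(0,1),(-1,1)),(0,0),(1,0),1)),
    ((1,1),(1,0),(((0,0),(-1,0),(0,-1),(-1,1)),(0,0),(1,0),1)),
    ((1,1),(0,1),(((0,0),(-1,0),(0,-1),(1,-1)),(0,0),(1,0),1)),
    ((1,1),(1,1),(((0,0),(-1,0),(0,1),(1,-1)),(0,0),(1,0),1))]),
  (((0,0),(1,1),(1,0),(0,1)),((0,0),(1,0),(0,1),(1,-1)),[((0,0),(0,0),(((0,0),(-1,0),(0,-1),(1,-1)),(0,0),(1,0),1)),
    ((0,0),(1,0),(((0,0),(-1,0),(0,-1),(-1,1)),(0,0),(1,0),1)),
    ((0,0),(0,1),(((0,0),(-1,0),(0,1),(1,-1)),(0,0),(1,0),1)),
    ((0,0),(1,1),(((0,0),(-1,0),(0,1),(-1,1)),(0,0),(1,0),1)),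
    ((1,0),(0,0),(((0,0),(-1,0),(0,-1),(1,-1)),(0,0),(1,0),1)),
    ((1,0),(1,0),(((0,0),(-1,0),(0,-1),(-1,1)),(0,0),(1,0),1)),
    ((1,0),(0,1),(((0,0),(-1,0),(0,1),(1,-1)),(0,0),(1,0),1)),
    ((1,0),(1,1),(((0,0),(-1,0),(0,1),(-1,1)),(0,0),(1,0),1)),
    ((0,1),(0,0),(((0,0),(-1,0),(0,-1),(1,-1)),(0,0),(1,0),1)),
    ((0,1),(1,0),(((0,0),(-1,0),(0,-1),(-1,1)),(0,0),(1,0),1)),
    ((0,1),(0,1),(((0,0),(-1,0),(0,1),(1,-1)),(0,0),(1,0),1)),
    ((0,1),(1,1),(((0,0),(-1,0),(0,1),(-1,1)),(0,0),(1,0),1)),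
    ((1,1),(0,0),(((0,0),(-1,0),(0,-1),(1,-1)),(0,0),(1,0),1)),
    ((1,1),(1,0),(((0,0),(-1,0),(0,-1),(-1,1)),(0,0),(1,0),1)),
    ((1,1),(0,1),(((0,0),(-1,0),(0,1),(1,-1)),(0,0),(1,0),1)),
    ((1,1),(1,1),(((0,0),(-1,0),(0,1),(-1,1)),(0,0),(1,0),1))]),
  (((0,0),(1,1),(0,1),(1,0)),((0,0),(1,0),(1,-1),(0,1)),[((0,0),(0,0),(((0,0),(-1,0),(1,-1),(0,-1)),(0,0),(1,0),1)),
    ((0,0),(1,0),(((0,0),(-1,0),(-1,1),(0,-1)),(0,0),(1,0),1)),
    ((0,0),(0,1),(((0,0),(-1,0),(1,-1),(0,1)),(0,0),(1,0),1)),
    ((0,0),(1,1),(((0,0),(-1,0),(-1,1),(0,1)),(0,0),(1,0),1)),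
    ((1,0),(0,0),(((0,0),(-1,0),(1,-1),(0,-1)),(0,0),(1,0),1)),
    ((1,0),(1,0),(((0,0),(-1,0),(-1,1),(0,-1)),(0,0),(1,0),1)),
    ((1,0),(0,1),(((0,0),(-1,0),(1,-1),(0,1)),(0,0),(1,0),1)),
    ((1,0),(1,1),(((0,0),(-1,0),(-1,1),(0,1)),(0,0),(1,0),1)),
    ((0,1),(0,0),(((0,0),(-1,0),(1,-1),(0,-1)),(0,0),(1,0),1)),
    ((0,1),(1,0),(((0,0),(-1,0),(-1,1),(0,-1)),(0,0),(1,0),1)),
    ((0,1),(0,1),(((0,0),(-1,0),(1,-1),(0,1)),(0,0),(1,0),1)),
    ((0,1),(1,1),(((0,0),(-1,0),(-1,1),(0,1)),(0,0),(1,0),1)),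
    ((1,1),(0,0),(((0,0),(-1,0),(1,-1),(0,-1)),(0,0),(1,0),1)),
    ((1,1),(1,0),(((0,0),(-1,0),(-1,1),(0,-1)),(0,0),(1,0),1)),
    ((1,1),(0,1),(((0,0),(-1,0),(1,-1),(0,1)),(0,0),(1,0),1)),
    ((1,1),(1,1),(((0,0),(-1,0),(-1,1),(0,1)),(0,0),(1,0),1))]),
  (((1,0),(0,0),(0,1),(1,1)),((0,0),(1,0),(1,-1),(0,1)),[((0,0),(0,0),(((-1,0),(0,0),(0,-1),(-1,1)),(1,0),(1,0),1)),
    ((0,0),(1,0),(((-1,0),(0,0),(0,1),(1,-1)),(1,0),(1,0),1)),
    ((0,0),(0,1),(((-1,0),(0,0),(0,-1),(1,-1)),(1,0),(1,0),1)),
    ((0,0),(1,1),(((-1,0),(0,0),(0,1),(-1,1)),(1,0),(1,0),1)),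
    ((1,0),(0,0),(((-1,0),(0,0),(0,1),(1,-1)),(1,0),(1,0),1)),
    ((1,0),(1,0),(((-1,0),(0,0),(0,-1),(-1,1)),(1,0),(1,0),1)),
    ((1,0),(0,1),(((-1,0),(0,0),(0,1),(-1,1)),(1,0),(1,0),1)),
    ((1,0),(1,1),(((-1,0),(0,0),(0,-1),(1,-1)),(1,0),(1,0),1)),
    ((0,1),(0,0),(((-1,0),(0,0),(0,-1),(1,-1)),(1,0),(1,0),1)),
    ((0,1),(1,0),(((-1,0),(0,0),(0,1),(-1,1)),(1,0),(1,0),1)),
    ((0,1),(0,1),(((-1,0),(0,0),(0,-1),(-1,1)),(1,0),(1,0),1)),
    ((0,1),(1,1),(((-1,0),(0,0),(0,1),(1,-1)),(1,0),(1,0),1)),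
    ((1,1),(0,0),(((-1,0),(0,0),(0,1),(-1,1)),(1,0),(1,0),1)),
    ((1,1),(1,0),(((-1,0),(0,0),(0,-1),(1,-1)),(1,0),(1,0),1)),
    ((1,1),(0,1),(((-1,0),(0,0),(0,1),(1,-1)),(1,0),(1,0),1)),
    ((1,1),(1,1),(((-1,0),(0,0),(0,-1),(-1,1)),(1,0),(1,0),1))]),
  (((1,0),(0,0),(1,1),(0,1)),((0,0),(1,0),(0,1),(1,-1)),[((0,0),(0,0),(((-1,0),(0,0),(-1,1),(0,-1)),(1,0),(1,0),1)),
    ((0,0),(1,0),(((-1,0),(0,0),(1,-1),(0,1)),(1,0),(1,0),1)),
    ((0,0),(0,1),(((-1,0),(0,0),(1,-1),(0,-1)),(1,0),(1,0),1)),
    ((0,0),(1,1),(((-1,0),(0,0),(-1,1),(0,1)),(1,0),(1,0),1)),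
    ((1,0),(0,0),(((-1,0),(0,0),(1,-1),(0,1)),(1,0),(1,0),1)),
    ((1,0),(1,0),(((-1,0),(0,0),(-1,1),(0,-1)),(1,0),(1,0),1)),
    ((1,0),(0,1),(((-1,0),(0,0),(-1,1),(0,1)),(1,0),(1,0),1)),
    ((1,0),(1,1),(((-1,0),(0,0),(1,-1),(0,-1)),(1,0),(1,0),1)),
    ((0,1),(0,0),(((-1,0),(0,0),(1,-1),(0,-1)),(1,0),(1,0),1)),
    ((0,1),(1,0),(((-1,0),(0,0),(-1,1),(0,1)),(1,0),(1,0),1)),
    ((0,1),(0,1),(((-1,0),(0,0),(-1,1),(0,-1)),(1,0),(1,0),1)),
    ((0,1),(1,1),(((-1,0),(0,0),(1,-1),(0,1)),(1,0),(1,0),1)),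
    ((1,1),(0,0),(((-1,0),(0,0),(-1,1),(0,1)),(1,0),(1,0),1)),
    ((1,1),(1,0),(((-1,0),(0,0),(1,-1),(0,-1)),(1,0),(1,0),1)),
    ((1,1),(0,1),(((-1,0),(0,0),(1,-1),(0,1)),(1,0),(1,0),1)),
    ((1,1),(1,1),(((-1,0),(0,0),(-1,1),(0,-1)),(1,0),(1,0),1))]),
  (((1,0),(1,0),(1,0),(1,0)),((0,0),(1,0),(1,-1),(0,1)),[((0,0),(0,0),(((-1,0),(-1,0),(-1,0),(1,0)),(1,0),(0,0),1)),
    ((0,0),(1,0),(((-1,0),(-1,0),(-1,0),(1,0)),(1,0),(0,0),1)),
    ((0,0),(0,1),(((-1,0),(-1,0),(-1,0),(1,0)),(1,0),(0,0),1)),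
    ((0,0),(1,1),(((-1,0),(-1,0),(-1,0),(1,0)),(1,0),(0,0),1)),
    ((1,0),(0,0),(((-1,0),(-1,0),(-1,0),(-1,0)),(1,0),(0,0),1)),
    ((1,0),(1,0),(((-1,0),(-1,0),(-1,0),(-1,0)),(1,0),(0,0),1)),
    ((1,0),(0,1),(((-1,0),(-1,0),(-1,0),(-1,0)),(1,0),(0,0),1)),
    ((1,0),(1,1),(((-1,0),(-1,0),(-1,0),(-1,0)),(1,0),(0,0),1)),
    ((0,1),(0,0),(((-1,0),(-1,1),(0,0),(0,-1)),(1,0),(0,1),2)),
    ((0,1),(1,0),(((-1,0),(-1,1),(0,0),(0,-1)),(1,0),(0,1),2)),
    ((0,1),(0,1),(((-1,0),(-1,1),(0,0),(0,1)),(1,0),(0,1),2)),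
    ((0,1),(1,1),(((-1,0),(-1,1),(0,0),(0,-1)),(1,0),(0,1),2)),
    ((1,1),(0,0),(((-1,0),(-1,1),(0,0),(0,-1)),(1,0),(0,1),2)),
    ((1,1),(1,0),(((-1,0),(-1,1),(0,0),(0,1)),(1,0),(0,1),2)),
    ((1,1),(0,1),(((-1,0),(-1,1),(0,0),(0,-1)),(1,0),(0,1),2)),
    ((1,1),(1,1),(((-1,0),(-1,1),(0,0),(0,-1)),(1,0),(0,1),2))]),
  (((1,0),(0,1),(0,0),(1,1)),((0,0),(1,0),(0,1),(1,-1)),[((0,0),(0,0),(((-1,0),(0,-1),(0,0),(-1,1)),(1,0),(1,1),1)),
    ((0,0),(1,0),(((-1,0),(0,1),(0,0),(-1,1)),(1,0),(1,1),1)),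
    ((0,0),(0,1),(((-1,0),(0,1),(0,0),(1,-1)),(1,0),(1,1),1)),
    ((0,0),(1,1),(((-1,0),(0,-1),(0,0),(1,-1)),(1,0),(1,1),1)),
    ((1,0),(0,0),(((-1,0),(0,1),(0,0),(1,-1)),(1,0),(1,1),1)),
    ((1,0),(1,0),(((-1,0),(0,-1),(0,0),(1,-1)),(1,0),(1,1),1)),
    ((1,0),(0,1),(((-1,0),(0,-1),(0,0),(-1,1)),(1,0),(1,1),1)),
    ((1,0),(1,1),(((-1,0),(0,1),(0,0),(-1,1)),(1,0),(1,1),1)),
    ((0,1),(0,0),(((-1,0),(0,-1),(0,0),(1,-1)),(1,0),(1,1),1)),
    ((0,1),(1,0),(((-1,0),(0,1),(0,0),(1,-1)),(1,0),(1,1),1)),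
    ((0,1),(0,1),(((-1,0),(0,1),(0,0),(-1,1)),(1,0),(1,1),1)),
    ((0,1),(1,1),(((-1,0),(0,-1),(0,0),(-1,1)),(1,0),(1,1),1)),
    ((1,1),(0,0),(((-1,0),(0,1),(0,0),(-1,1)),(1,0),(1,1),1)),
    ((1,1),(1,0),(((-1,0),(0,-1),(0,0),(-1,1)),(1,0),(1,1),1)),
    ((1,1),(0,1),(((-1,0),(0,-1),(0,0),(1,-1)),(1,0),(1,1),1)),
    ((1,1),(1,1),(((-1,0),(0,1),(0,0),(1,-1)),(1,0),(1,1),1))]),
  (((1,0),(0,1),(1,1),(0,0)),((0,0),(1,0),(1,-1),(0,1)),[((0,0),(0,0),(((-1,0),(0,-1),(-1,1),(0,0)),(1,0),(1,1),1)),
    ((0,0),(1,0),(((-1,0),(0,1),(-1,1),(0,0)),(1,0),(1,1),1)),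
    ((0,0),(0,1),(((-1,0),(0,1),(1,-1),(0,0)),(1,0),(1,1),1)),
    ((0,0),(1,1),(((-1,0),(0,-1),(1,-1),(0,0)),(1,0),(1,1),1)),
    ((1,0),(0,0),(((-1,0),(0,1),(1,-1),(0,0)),(1,0),(1,1),1)),
    ((1,0),(1,0),(((-1,0),(0,-1),(1,-1),(0,0)),(1,0),(1,1),1)),
    ((1,0),(0,1),(((-1,0),(0,-1),(-1,1),(0,0)),(1,0),(1,1),1)),
    ((1,0),(1,1),(((-1,0),(0,1),(-1,1),(0,0)),(1,0),(1,1),1)),
    ((0,1),(0,0),(((-1,0),(0,-1),(1,-1),(0,0)),(1,0),(1,1),1)),
    ((0,1),(1,0),(((-1,0),(0,1),(1,-1),(0,0)),(1,0),(1,1),1)),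
    ((0,1),(0,1),(((-1,0),(0,1),(-1,1),(0,0)),(1,0),(1,1),1)),
    ((0,1),(1,1),(((-1,0),(0,-1),(-1,1),(0,0)),(1,0),(1,1),1)),
    ((1,1),(0,0),(((-1,0),(0,1),(-1,1),(0,0)),(1,0),(1,1),1)),
    ((1,1),(1,0),(((-1,0),(0,-1),(-1,1),(0,0)),(1,0),(1,1),1)),
    ((1,1),(0,1),(((-1,0),(0,-1),(1,-1),(0,0)),(1,0),(1,1),1)),
    ((1,1),(1,1),(((-1,0),(0,1),(1,-1),(0,0)),(1,0),(1,1),1))]),
  (((1,0),(1,1),(0,0),(0,1)),((0,0),(1,0),(1,-1),(0,1)),[((0,0),(0,0),(((-1,0),(-1,1),(0,0),(0,-1)),(1,0),(0,1),1)),
    ((0,0),(1,0),(((-1,0),(1,-1),(0,0),(0,-1)),(1,0),(0,1),1)),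
    ((0,0),(0,1),(((-1,0),(-1,1),(0,0),(0,1)),(1,0),(0,1),1)),
    ((0,0),(1,1),(((-1,0),(1,-1),(0,0),(0,1)),(1,0),(0,1),1)),
    ((1,0),(0,0),(((-1,0),(1,-1),(0,0),(0,1)),(1,0),(0,1),1)),
    ((1,0),(1,0),(((-1,0),(-1,1),(0,0),(0,1)),(1,0),(0,1),1)),
    ((1,0),(0,1),(((-1,0),(1,-1),(0,0),(0,-1)),(1,0),(0,1),1)),
    ((1,0),(1,1),(((-1,0),(-1,1),(0,0),(0,-1)),(1,0),(0,1),1)),
    ((0,1),(0,0),(((-1,0),(1,-1),(0,0),(0,-1)),(1,0),(0,1),1)),
    ((0,1),(1,0),(((-1,0),(-1,1),(0,0),(0,-1)),(1,0),(0,1),1)),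
    ((0,1),(0,1),(((-1,0),(1,-1),(0,0),(0,1)),(1,0),(0,1),1)),
    ((0,1),(1,1),(((-1,0),(-1,1),(0,0),(0,1)),(1,0),(0,1),1)),
    ((1,1),(0,0),(((-1,0),(-1,1),(0,0),(0,1)),(1,0),(0,1),1)),
    ((1,1),(1,0),(((-1,0),(1,-1),(0,0),(0,1)),(1,0),(0,1),1)),
    ((1,1),(0,1),(((-1,0),(-1,1),(0,0),(0,-1)),(1,0),(0,1),1)),
    ((1,1),(1,1),(((-1,0),(1,-1),(0,0),(0,-1)),(1,0),(0,1),1))]),
  (((1,0),(1,1),(0,1),(0,0)),((0,0),(1,0),(0,1),(1,-1)),[((0,0),(0,0),(((-1,0),(-1,1),(0,-1),(0,0)),(1,0),(0,1),1)),
    ((0,0),(1,0),(((-1,0),(1,-1),(0,-1),(0,0)),(1,0),(0,1),1)),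
    ((0,0),(0,1),(((-1,0),(-1,1),(0,1),(0,0)),(1,0),(0,1),1)),
    ((0,0),(1,1),(((-1,0),(1,-1),(0,1),(0,0)),(1,0),(0,1),1)),
    ((1,0),(0,0),(((-1,0),(1,-1),(0,1),(0,0)),(1,0),(0,1),1)),
    ((1,0),(1,0),(((-1,0),(-1,1),(0,1),(0,0)),(1,0),(0,1),1)),
    ((1,0),(0,1),(((-1,0),(1,-1),(0,-1),(0,0)),(1,0),(0,1),1)),
    ((1,0),(1,1),(((-1,0),(-1,1),(0,-1),(0,0)),(1,0),(0,1),1)),
    ((0,1),(0,0),(((-1,0),(1,-1),(0,-1),(0,0)),(1,0),(0,1),1)),
    ((0,1),(1,0),(((-1,0),(-1,1),(0,-1),(0,0)),(1,0),(0,1),1)),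
    ((0,1),(0,1),(((-1,0),(1,-1),(0,1),(0,0)),(1,0),(0,1),1)),
    ((0,1),(1,1),(((-1,0),(-1,1),(0,1),(0,0)),(1,0),(0,1),1)),
    ((1,1),(0,0),(((-1,0),(-1,1),(0,1),(0,0)),(1,0),(0,1),1)),
    ((1,1),(1,0),(((-1,0),(1,-1),(0,1),(0,0)),(1,0),(0,1),1)),
    ((1,1),(0,1),(((-1,0),(-1,1),(0,-1),(0,0)),(1,0),(0,1),1)),
    ((1,1),(1,1),(((-1,0),(1,-1),(0,-1),(0,0)),(1,0),(0,1),1))]),
  (((0,1),(0,0),(1,0),(1,1)),((0,0),(1,0),(0,1),(1,-1)),[((0,0),(0,0),(((-1,0),(0,0),(-1,1),(0,1)),(1,0),(1,0),1)),
    ((0,0),(1,0),(((-1,0),(0,0),(-1,1),(0,-1)),(1,0),(1,0),1)),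
    ((0,0),(0,1),(((-1,0),(0,0),(1,-1),(0,-1)),(1,0),(1,0),1)),
    ((0,0),(1,1),(((-1,0),(0,0),(1,-1),(0,1)),(1,0),(1,0),1)),
    ((1,0),(0,0),(((-1,0),(0,0),(-1,1),(0,-1)),(1,0),(1,0),1)),
    ((1,0),(1,0),(((-1,0),(0,0),(-1,1),(0,1)),(1,0),(1,0),1)),
    ((1,0),(0,1),(((-1,0),(0,0),(1,-1),(0,1)),(1,0),(1,0),1)),
    ((1,0),(1,1),(((-1,0),(0,0),(1,-1),(0,-1)),(1,0),(1,0),1)),
    ((0,1),(0,0),(((-1,0),(0,0),(1,-1),(0,-1)),(1,0),(1,0),1)),
    ((0,1),(1,0),(((-1,0),(0,0),(1,-1),(0,1)),(1,0),(1,0),1)),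
    ((0,1),(0,1),(((-1,0),(0,0),(-1,1),(0,1)),(1,0),(1,0),1)),
    ((0,1),(1,1),(((-1,0),(0,0),(-1,1),(0,-1)),(1,0),(1,0),1)),
    ((1,1),(0,0),(((-1,0),(0,0),(1,-1),(0,1)),(1,0),(1,0),1)),
    ((1,1),(1,0),(((-1,0),(0,0),(1,-1),(0,-1)),(1,0),(1,0),1)),
    ((1,1),(0,1),(((-1,0),(0,0),(-1,1),(0,-1)),(1,0),(1,0),1)),
    ((1,1),(1,1),(((-1,0),(0,0),(-1,1),(0,1)),(1,0),(1,0),1))]),
  (((0,1),(0,0),(1,1),(1,0)),((0,0),(1,0),(1,-1),(0,1)),[((0,0),(0,0),(((-1,0),(0,0),(0,1),(-1,1)),(1,0),(1,0),1)),
    ((0,0),(1,0),(((-1,0),(0,0),(0,-1),(-1,1)),(1,0),(1,0),1)),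
    ((0,0),(0,1),(((-1,0),(0,0),(0,-1),(1,-1)),(1,0),(1,0),1)),
    ((0,0),(1,1),(((-1,0),(0,0),(0,1),(1,-1)),(1,0),(1,0),1)),
    ((1,0),(0,0),(((-1,0),(0,0),(0,-1),(-1,1)),(1,0),(1,0),1)),
    ((1,0),(1,0),(((-1,0),(0,0),(0,1),(-1,1)),(1,0),(1,0),1)),
    ((1,0),(0,1),(((-1,0),(0,0),(0,1),(1,-1)),(1,0),(1,0),1)),
    ((1,0),(1,1),(((-1,0),(0,0),(0,-1),(1,-1)),(1,0),(1,0),1)),
    ((0,1),(0,0),(((-1,0),(0,0),(0,-1),(1,-1)),(1,0),(1,0),1)),
    ((0,1),(1,0),(((-1,0),(0,0),(0,1),(1,-1)),(1,0),(1,0),1)),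
    ((0,1),(0,1),(((-1,0),(0,0),(0,1),(-1,1)),(1,0),(1,0),1)),
    ((0,1),(1,1),(((-1,0),(0,0),(0,-1),(-1,1)),(1,0),(1,0),1)),
    ((1,1),(0,0),(((-1,0),(0,0),(0,1),(1,-1)),(1,0),(1,0),1)),
    ((1,1),(1,0),(((-1,0),(0,0),(0,-1),(1,-1)),(1,0),(1,0),1)),
    ((1,1),(0,1),(((-1,0),(0,0),(0,-1),(-1,1)),(1,0),(1,0),1)),
    ((1,1),(1,1),(((-1,0),(0,0),(0,1),(-1,1)),(1,0),(1,0),1))]),
  (((0,1),(1,0),(0,0),(1,1)),((0,0),(1,0),(1,-1),(0,1)),[((0,0),(0,0),(((-1,0),(-1,1),(0,0),(0,1)),(1,0),(0,1),1)),
    ((0,0),(1,0),(((-1,0),(1,-1),(0,0),(0,-1)),(1,0),(0,1),1)),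
    ((0,0),(0,1),(((-1,0),(1,-1),(0,0),(0,1)),(1,0),(0,1),1)),
    ((0,0),(1,1),(((-1,0),(-1,1),(0,0),(0,-1)),(1,0),(0,1),1)),
    ((1,0),(0,0),(((-1,0),(-1,1),(0,0),(0,-1)),(1,0),(0,1),1)),
    ((1,0),(1,0),(((-1,0),(1,-1),(0,0),(0,1)),(1,0),(0,1),1)),
    ((1,0),(0,1),(((-1,0),(1,-1),(0,0),(0,-1)),(1,0),(0,1),1)),
    ((1,0),(1,1),(((-1,0),(-1,1),(0,0),(0,1)),(1,0),(0,1),1)),
    ((0,1),(0,0),(((-1,0),(1,-1),(0,0),(0,-1)),(1,0),(0,1),1)),
    ((0,1),(1,0),(((-1,0),(-1,1),(0,0),(0,1)),(1,0),(0,1),1)),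
    ((0,1),(0,1),(((-1,0),(-1,1),(0,0),(0,-1)),(1,0),(0,1),1)),
    ((0,1),(1,1),(((-1,0),(1,-1),(0,0),(0,1)),(1,0),(0,1),1)),
    ((1,1),(0,0),(((-1,0),(1,-1),(0,0),(0,1)),(1,0),(0,1),1)),
    ((1,1),(1,0),(((-1,0),(-1,1),(0,0),(0,-1)),(1,0),(0,1),1)),
    ((1,1),(0,1),(((-1,0),(-1,1),(0,0),(0,1)),(1,0),(0,1),1)),
    ((1,1),(1,1),(((-1,0),(1,-1),(0,0),(0,-1)),(1,0),(0,1),1))]),
  (((0,1),(1,0),(1,1),(0,0)),((0,0),(1,0),(0,1),(1,-1)),[((0,0),(0,0),(((-1,0),(-1,1),(0,1),(0,0)),(1,0),(0,1),1)),
    ((0,0),(1,0),(((-1,0),(1,-1),(0,-1),(0,0)),(1,0),(0,1),1)),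
    ((0,0),(0,1),(((-1,0),(1,-1),(0,1),(0,0)),(1,0),(0,1),1)),
    ((0,0),(1,1),(((-1,0),(-1,1),(0,-1),(0,0)),(1,0),(0,1),1)),
    ((1,0),(0,0),(((-1,0),(-1,1),(0,-1),(0,0)),(1,0),(0,1),1)),
    ((1,0),(1,0),(((-1,0),(1,-1),(0,1),(0,0)),(1,0),(0,1),1)),
    ((1,0),(0,1),(((-1,0),(1,-1),(0,-1),(0,0)),(1,0),(0,1),1)),
    ((1,0),(1,1),(((-1,0),(-1,1),(0,1),(0,0)),(1,0),(0,1),1)),
    ((0,1),(0,0),(((-1,0),(1,-1),(0,-1),(0,0)),(1,0),(0,1),1)),
    ((0,1),(1,0),(((-1,0),(-1,1),(0,1),(0,0)),(1,0),(0,1),1)),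
    ((0,1),(0,1),(((-1,0),(-1,1),(0,-1),(0,0)),(1,0),(0,1),1)),
    ((0,1),(1,1),(((-1,0),(1,-1),(0,1),(0,0)),(1,0),(0,1),1)),
    ((1,1),(0,0),(((-1,0),(1,-1),(0,1),(0,0)),(1,0),(0,1),1)),
    ((1,1),(1,0),(((-1,0),(-1,1),(0,-1),(0,0)),(1,0),(0,1),1)),
    ((1,1),(0,1),(((-1,0),(-1,1),(0,1),(0,0)),(1,0),(0,1),1)),
    ((1,1),(1,1),(((-1,0),(1,-1),(0,-1),(0,0)),(1,0),(0,1),1))]),
  (((0,1),(0,1),(0,1),(0,1)),((0,0),(1,0),(1,-1),(0,1)),[((0,0),(0,0),(((-1,0),(-1,0),(-1,0),(1,0)),(1,0),(0,0),1)),
    ((0,0),(1,0),(((-1,0),(-1,0),(-1,0),(1,0)),(1,0),(0,0),1)),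
    ((0,0),(0,1),(((-1,0),(-1,0),(-1,0),(1,0)),(1,0),(0,0),1)),
    ((0,0),(1,1),(((-1,0),(-1,0),(-1,0),(1,0)),(1,0),(0,0),1)),
    ((1,0),(0,0),(((-1,0),(-1,1),(0,0),(0,-1)),(1,0),(0,1),2)),
    ((1,0),(1,0),(((-1,0),(-1,1),(0,0),(0,-1)),(1,0),(0,1),2)),
    ((1,0),(0,1),(((-1,0),(-1,1),(0,0),(0,1)),(1,0),(0,1),2)),
    ((1,0),(1,1),(((-1,0),(-1,1),(0,0),(0,-1)),(1,0),(0,1),2)),
    ((0,1),(0,0),(((-1,0),(-1,0),(-1,0),(-1,0)),(1,0),(0,0),1)),
    ((0,1),(1,0),(((-1,0),(-1,0),(-1,0),(-1,0)),(1,0),(0,0),1)),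
    ((0,1),(0,1),(((-1,0),(-1,0),(-1,0),(-1,0)),(1,0),(0,0),1)),
    ((0,1),(1,1),(((-1,0),(-1,0),(-1,0),(-1,0)),(1,0),(0,0),1)),
    ((1,1),(0,0),(((-1,0),(-1,1),(0,0),(0,-1)),(1,0),(0,1),2)),
    ((1,1),(1,0),(((-1,0),(-1,1),(0,0),(0,-1)),(1,0),(0,1),2)),
    ((1,1),(0,1),(((-1,0),(-1,1),(0,0),(0,-1)),(1,0),(0,1),2)),
    ((1,1),(1,1),(((-1,0),(-1,1),(0,0),(0,1)),(1,0),(0,1),2))]),
  (((0,1),(1,1),(0,0),(1,0)),((0,0),(1,0),(0,1),(1,-1)),[((0,0),(0,0),(((-1,0),(0,1),(0,0),(-1,1)),(1,0),(1,1),1)),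
    ((0,0),(1,0),(((-1,0),(0,1),(0,0),(1,-1)),(1,0),(1,1),1)),
    ((0,0),(0,1),(((-1,0),(0,-1),(0,0),(-1,1)),(1,0),(1,1),1)),
    ((0,0),(1,1),(((-1,0),(0,-1),(0,0),(1,-1)),(1,0),(1,1),1)),
    ((1,0),(0,0),(((-1,0),(0,-1),(0,0),(-1,1)),(1,0),(1,1),1)),
    ((1,0),(1,0),(((-1,0),(0,-1),(0,0),(1,-1)),(1,0),(1,1),1)),
    ((1,0),(0,1),(((-1,0),(0,1),(0,0),(-1,1)),(1,0),(1,1),1)),
    ((1,0),(1,1),(((-1,0),(0,1),(0,0),(1,-1)),(1,0),(1,1),1)),
    ((0,1),(0,0),(((-1,0),(0,-1),(0,0),(1,-1)),(1,0),(1,1),1)),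
    ((0,1),(1,0),(((-1,0),(0,-1),(0,0),(-1,1)),(1,0),(1,1),1)),
    ((0,1),(0,1),(((-1,0),(0,1),(0,0),(1,-1)),(1,0),(1,1),1)),
    ((0,1),(1,1),(((-1,0),(0,1),(0,0),(-1,1)),(1,0),(1,1),1)),
    ((1,1),(0,0),(((-1,0),(0,1),(0,0),(1,-1)),(1,0),(1,1),1)),
    ((1,1),(1,0),(((-1,0),(0,1),(0,0),(-1,1)),(1,0),(1,1),1)),
    ((1,1),(0,1),(((-1,0),(0,-1),(0,0),(1,-1)),(1,0),(1,1),1)),
    ((1,1),(1,1),(((-1,0),(0,-1),(0,0),(-1,1)),(1,0),(1,1),1))]),
  (((0,1),(1,1),(1,0),(0,0)),((0,0),(1,0),(1,-1),(0,1)),[((0,0),(0,0),(((-1,0),(0,1),(-1,1),(0,0)),(1,0),(1,1),1)),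
    ((0,0),(1,0),(((-1,0),(0,1),(1,-1),(0,0)),(1,0),(1,1),1)),
    ((0,0),(0,1),(((-1,0),(0,-1),(-1,1),(0,0)),(1,0),(1,1),1)),
    ((0,0),(1,1),(((-1,0),(0,-1),(1,-1),(0,0)),(1,0),(1,1),1)),
    ((1,0),(0,0),(((-1,0),(0,-1),(-1,1),(0,0)),(1,0),(1,1),1)),
    ((1,0),(1,0),(((-1,0),(0,-1),(1,-1),(0,0)),(1,0),(1,1),1)),
    ((1,0),(0,1),(((-1,0),(0,1),(-1,1),(0,0)),(1,0),(1,1),1)),
    ((1,0),(1,1),(((-1,0),(0,1),(1,-1),(0,0)),(1,0),(1,1),1)),
    ((0,1),(0,0),(((-1,0),(0,-1),(1,-1),(0,0)),(1,0),(1,1),1)),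
    ((0,1),(1,0),(((-1,0),(0,-1),(-1,1),(0,0)),(1,0),(1,1),1)),
    ((0,1),(0,1),(((-1,0),(0,1),(1,-1),(0,0)),(1,0),(1,1),1)),
    ((0,1),(1,1),(((-1,0),(0,1),(-1,1),(0,0)),(1,0),(1,1),1)),
    ((1,1),(0,0),(((-1,0),(0,1),(1,-1),(0,0)),(1,0),(1,1),1)),
    ((1,1),(1,0),(((-1,0),(0,1),(-1,1),(0,0)),(1,0),(1,1),1)),
    ((1,1),(0,1),(((-1,0),(0,-1),(1,-1),(0,0)),(1,0),(1,1),1)),
    ((1,1),(1,1),(((-1,0),(0,-1),(-1,1),(0,0)),(1,0),(1,1),1))]),
  (((1,1),(0,0),(1,0),(0,1)),((0,0),(1,0),(1,-1),(0,1)),[((0,0),(0,0),(((-1,0),(0,0),(0,-1),(1,-1)),(1,0),(1,0),1)),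
    ((0,0),(1,0),(((-1,0),(0,0),(0,-1),(-1,1)),(1,0),(1,0),1)),
    ((0,0),(0,1),(((-1,0),(0,0),(0,1),(1,-1)),(1,0),(1,0),1)),
    ((0,0),(1,1),(((-1,0),(0,0),(0,1),(-1,1)),(1,0),(1,0),1)),
    ((1,0),(0,0),(((-1,0),(0,0),(0,-1),(-1,1)),(1,0),(1,0),1)),
    ((1,0),(1,0),(((-1,0),(0,0),(0,-1),(1,-1)),(1,0),(1,0),1)),
    ((1,0),(0,1),(((-1,0),(0,0),(0,1),(-1,1)),(1,0),(1,0),1)),
    ((1,0),(1,1),(((-1,0),(0,0),(0,1),(1,-1)),(1,0),(1,0),1)),
    ((0,1),(0,0),(((-1,0),(0,0),(0,1),(1,-1)),(1,0),(1,0),1)),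
    ((0,1),(1,0),(((-1,0),(0,0),(0,1),(-1,1)),(1,0),(1,0),1)),
    ((0,1),(0,1),(((-1,0),(0,0),(0,-1),(1,-1)),(1,0),(1,0),1)),
    ((0,1),(1,1),(((-1,0),(0,0),(0,-1),(-1,1)),(1,0),(1,0),1)),
    ((1,1),(0,0),(((-1,0),(0,0),(0,1),(-1,1)),(1,0),(1,0),1)),
    ((1,1),(1,0),(((-1,0),(0,0),(0,1),(1,-1)),(1,0),(1,0),1)),
    ((1,1),(0,1),(((-1,0),(0,0),(0,-1),(-1,1)),(1,0),(1,0),1)),
    ((1,1),(1,1),(((-1,0),(0,0),(0,-1),(1,-1)),(1,0),(1,0),1))]),
  (((1,1),(0,0),(0,1),(1,0)),((0,0),(1,0),(0,1),(1,-1)),[((0,0),(0,0),(((-1,0),(0,0),(1,-1),(0,-1)),(1,0),(1,0),1)),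
    ((0,0),(1,0),(((-1,0),(0,0),(-1,1),(0,-1)),(1,0),(1,0),1)),
    ((0,0),(0,1),(((-1,0),(0,0),(1,-1),(0,1)),(1,0),(1,0),1)),
    ((0,0),(1,1),(((-1,0),(0,0),(-1,1),(0,1)),(1,0),(1,0),1)),
    ((1,0),(0,0),(((-1,0),(0,0),(-1,1),(0,-1)),(1,0),(1,0),1)),
    ((1,0),(1,0),(((-1,0),(0,0),(1,-1),(0,-1)),(1,0),(1,0),1)),
    ((1,0),(0,1),(((-1,0),(0,0),(-1,1),(0,1)),(1,0),(1,0),1)),
    ((1,0),(1,1),(((-1,0),(0,0),(1,-1),(0,1)),(1,0),(1,0),1)),
    ((0,1),(0,0),(((-1,0),(0,0),(1,-1),(0,1)),(1,0),(1,0),1)),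
    ((0,1),(1,0),(((-1,0),(0,0),(-1,1),(0,1)),(1,0),(1,0),1)),
    ((0,1),(0,1),(((-1,0),(0,0),(1,-1),(0,-1)),(1,0),(1,0),1)),
    ((0,1),(1,1),(((-1,0),(0,0),(-1,1),(0,-1)),(1,0),(1,0),1)),
    ((1,1),(0,0),(((-1,0),(0,0),(-1,1),(0,1)),(1,0),(1,0),1)),
    ((1,1),(1,0),(((-1,0),(0,0),(1,-1),(0,1)),(1,0),(1,0),1)),
    ((1,1),(0,1),(((-1,0),(0,0),(-1,1),(0,-1)),(1,0),(1,0),1)),
    ((1,1),(1,1),(((-1,0),(0,0),(1,-1),(0,-1)),(1,0),(1,0),1))]),
  (((1,1),(1,0),(0,0),(0,1)),((0,0),(1,0),(0,1),(1,-1)),[((0,0),(0,0),(((-1,0),(0,-1),(0,0),(1,-1)),(1,0),(1,1),1)),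
    ((0,0),(1,0),(((-1,0),(0,1),(0,0),(-1,1)),(1,0),(1,1),1)),
    ((0,0),(0,1),(((-1,0),(0,-1),(0,0),(-1,1)),(1,0),(1,1),1)),
    ((0,0),(1,1),(((-1,0),(0,1),(0,0),(1,-1)),(1,0),(1,1),1)),
    ((1,0),(0,0),(((-1,0),(0,-1),(0,0),(-1,1)),(1,0),(1,1),1)),
    ((1,0),(1,0),(((-1,0),(0,1),(0,0),(1,-1)),(1,0),(1,1),1)),
    ((1,0),(0,1),(((-1,0),(0,-1),(0,0),(1,-1)),(1,0),(1,1),1)),
    ((1,0),(1,1),(((-1,0),(0,1),(0,0),(-1,1)),(1,0),(1,1),1)),
    ((0,1),(0,0),(((-1,0),(0,1),(0,0),(1,-1)),(1,0),(1,1),1)),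
    ((0,1),(1,0),(((-1,0),(0,-1),(0,0),(-1,1)),(1,0),(1,1),1)),
    ((0,1),(0,1),(((-1,0),(0,1),(0,0),(-1,1)),(1,0),(1,1),1)),
    ((0,1),(1,1),(((-1,0),(0,-1),(0,0),(1,-1)),(1,0),(1,1),1)),
    ((1,1),(0,0),(((-1,0),(0,1),(0,0),(-1,1)),(1,0),(1,1),1)),
    ((1,1),(1,0),(((-1,0),(0,-1),(0,0),(1,-1)),(1,0),(1,1),1)),
    ((1,1),(0,1),(((-1,0),(0,1),(0,0),(1,-1)),(1,0),(1,1),1)),
    ((1,1),(1,1),(((-1,0),(0,-1),(0,0),(-1,1)),(1,0),(1,1),1))]),
  (((1,1),(1,0),(0,1),(0,0)),((0,0),(1,0),(1,-1),(0,1)),[((0,0),(0,0),(((-1,0),(0,-1),(1,-1),(0,0)),(1,0),(1,1),1)),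
    ((0,0),(1,0),(((-1,0),(0,1),(-1,1),(0,0)),(1,0),(1,1),1)),
    ((0,0),(0,1),(((-1,0),(0,-1),(-1,1),(0,0)),(1,0),(1,1),1)),
    ((0,0),(1,1),(((-1,0),(0,1),(1,-1),(0,0)),(1,0),(1,1),1)),
    ((1,0),(0,0),(((-1,0),(0,-1),(-1,1),(0,0)),(1,0),(1,1),1)),
    ((1,0),(1,0),(((-1,0),(0,1),(1,-1),(0,0)),(1,0),(1,1),1)),
    ((1,0),(0,1),(((-1,0),(0,-1),(1,-1),(0,0)),(1,0),(1,1),1)),
    ((1,0),(1,1),(((-1,0),(0,1),(-1,1),(0,0)),(1,0),(1,1),1)),
    ((0,1),(0,0),(((-1,0),(0,1),(1,-1),(0,0)),(1,0),(1,1),1)),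
    ((0,1),(1,0),(((-1,0),(0,-1),(-1,1),(0,0)),(1,0),(1,1),1)),
    ((0,1),(0,1),(((-1,0),(0,1),(-1,1),(0,0)),(1,0),(1,1),1)),
    ((0,1),(1,1),(((-1,0),(0,-1),(1,-1),(0,0)),(1,0),(1,1),1)),
    ((1,1),(0,0),(((-1,0),(0,1),(-1,1),(0,0)),(1,0),(1,1),1)),
    ((1,1),(1,0),(((-1,0),(0,-1),(1,-1),(0,0)),(1,0),(1,1),1)),
    ((1,1),(0,1),(((-1,0),(0,1),(1,-1),(0,0)),(1,0),(1,1),1)),
    ((1,1),(1,1),(((-1,0),(0,-1),(-1,1),(0,0)),(1,0),(1,1),1))]),
  (((1,1),(0,1),(0,0),(1,0)),((0,0),(1,0),(1,-1),(0,1)),[((0,0),(0,0),(((-1,0),(1,-1),(0,0),(0,-1)),(1,0),(0,1),1)),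
    ((0,0),(1,0),(((-1,0),(1,-1),(0,0),(0,1)),(1,0),(0,1),1)),
    ((0,0),(0,1),(((-1,0),(-1,1),(0,0),(0,1)),(1,0),(0,1),1)),
    ((0,0),(1,1),(((-1,0),(-1,1),(0,0),(0,-1)),(1,0),(0,1),1)),
    ((1,0),(0,0),(((-1,0),(-1,1),(0,0),(0,-1)),(1,0),(0,1),1)),
    ((1,0),(1,0),(((-1,0),(-1,1),(0,0),(0,1)),(1,0),(0,1),1)),
    ((1,0),(0,1),(((-1,0),(1,-1),(0,0),(0,1)),(1,0),(0,1),1)),
    ((1,0),(1,1),(((-1,0),(1,-1),(0,0),(0,-1)),(1,0),(0,1),1)),
    ((0,1),(0,0),(((-1,0),(1,-1),(0,0),(0,1)),(1,0),(0,1),1)),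
    ((0,1),(1,0),(((-1,0),(1,-1),(0,0),(0,-1)),(1,0),(0,1),1)),
    ((0,1),(0,1),(((-1,0),(-1,1),(0,0),(0,-1)),(1,0),(0,1),1)),
    ((0,1),(1,1),(((-1,0),(-1,1),(0,0),(0,1)),(1,0),(0,1),1)),
    ((1,1),(0,0),(((-1,0),(-1,1),(0,0),(0,1)),(1,0),(0,1),1)),
    ((1,1),(1,0),(((-1,0),(-1,1),(0,0),(0,-1)),(1,0),(0,1),1)),
    ((1,1),(0,1),(((-1,0),(1,-1),(0,0),(0,-1)),(1,0),(0,1),1)),
    ((1,1),(1,1),(((-1,0),(1,-1),(0,0),(0,1)),(1,0),(0,1),1))]),
  (((1,1),(0,1),(1,0),(0,0)),((0,0),(1,0),(0,1),(1,-1)),[((0,0),(0,0),(((-1,0),(1,-1),(0,-1),(0,0)),(1,0),(0,1),1)),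
    ((0,0),(1,0),(((-1,0),(1,-1),(0,1),(0,0)),(1,0),(0,1),1)),
    ((0,0),(0,1),(((-1,0),(-1,1),(0,1),(0,0)),(1,0),(0,1),1)),
    ((0,0),(1,1),(((-1,0),(-1,1),(0,-1),(0,0)),(1,0),(0,1),1)),
    ((1,0),(0,0),(((-1,0),(-1,1),(0,-1),(0,0)),(1,0),(0,1),1)),
    ((1,0),(1,0),(((-1,0),(-1,1),(0,1),(0,0)),(1,0),(0,1),1)),
    ((1,0),(0,1),(((-1,0),(1,-1),(0,1),(0,0)),(1,0),(0,1),1)),
    ((1,0),(1,1),(((-1,0),(1,-1),(0,-1),(0,0)),(1,0),(0,1),1)),
    ((0,1),(0,0),(((-1,0),(1,-1),(0,1),(0,0)),(1,0),(0,1),1)),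
    ((0,1),(1,0),(((-1,0),(1,-1),(0,-1),(0,0)),(1,0),(0,1),1)),
    ((0,1),(0,1),(((-1,0),(-1,1),(0,-1),(0,0)),(1,0),(0,1),1)),
    ((0,1),(1,1),(((-1,0),(-1,1),(0,1),(0,0)),(1,0),(0,1),1)),
    ((1,1),(0,0),(((-1,0),(-1,1),(0,1),(0,0)),(1,0),(0,1),1)),
    ((1,1),(1,0),(((-1,0),(-1,1),(0,-1),(0,0)),(1,0),(0,1),1)),
    ((1,1),(0,1),(((-1,0),(1,-1),(0,-1),(0,0)),(1,0),(0,1),1)),
    ((1,1),(1,1),(((-1,0),(1,-1),(0,1),(0,0)),(1,0),(0,1),1))]),
  (((1,1),(1,1),(1,1),(1,1)),((0,0),(1,0),(1,-1),(0,1)),[((0,0),(0,0),(((-1,0),(-1,0),(-1,0),(1,0)),(1,0),(0,0),1)),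
    ((0,0),(1,0),(((-1,0),(-1,0),(-1,0),(1,0)),(1,0),(0,0),1)),
    ((0,0),(0,1),(((-1,0),(-1,0),(-1,0),(1,0)),(1,0),(0,0),1)),
    ((0,0),(1,1),(((-1,0),(-1,0),(-1,0),(1,0)),(1,0),(0,0),1)),
    ((1,0),(0,0),(((-1,0),(-1,1),(0,0),(0,-1)),(1,0),(0,1),2)),
    ((1,0),(1,0),(((-1,0),(-1,1),(0,0),(0,1)),(1,0),(0,1),2)),
    ((1,0),(0,1),(((-1,0),(-1,1),(0,0),(0,-1)),(1,0),(0,1),2)),
    ((1,0),(1,1),(((-1,0),(-1,1),(0,0),(0,-1)),(1,0),(0,1),2)),
    ((0,1),(0,0),(((-1,0),(-1,1),(0,0),(0,-1)),(1,0),(0,1),2)),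
    ((0,1),(1,0),(((-1,0),(-1,1),(0,0),(0,-1)),(1,0),(0,1),2)),
    ((0,1),(0,1),(((-1,0),(-1,1),(0,0),(0,-1)),(1,0),(0,1),2)),
    ((0,1),(1,1),(((-1,0),(-1,1),(0,0),(0,1)),(1,0),(0,1),2)),
    ((1,1),(0,0),(((-1,0),(-1,0),(-1,0),(-1,0)),(1,0),(0,0),1)),
    ((1,1),(1,0),(((-1,0),(-1,0),(-1,0),(-1,0)),(1,0),(0,0),1)),
    ((1,1),(0,1),(((-1,0),(-1,0),(-1,0),(-1,0)),(1,0),(0,0),1)),
    ((1,1),(1,1),(((-1,0),(-1,0),(-1,0),(-1,0)),(1,0),(0,0),1))])]"

definition goods :: "zv list" where "goods = map fst wtab"

fun okw :: "zv \<Rightarrow> zv \<Rightarrow> zt \<Rightarrow> zt \<Rightarrow> (zv \<times> zt \<times> zt \<times> nat) \<Rightarrow> bool" where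
  "okw q g s0 r0 (b,be,ga,k) = (b \<in> set allB \<and> evv (vsub (vsub b (vsmul be onesv)) (vsmul ga g)) \<and> evz (zdot q b) \<and>
     (let E0 = zadd (zhalf (zdot q b)) (zadd (zmul be s0) (zmul ga r0)); w = vsub q (vsmul E0 b) in
       (k = 1 \<and> evv w) \<or> (k = 2 \<and> q \<in> set spanl \<and> m2v w \<notin> set spanl)))"

definition classA :: "zv \<Rightarrow> zv \<Rightarrow> bool" where
  "classA u q = list_ex (\<lambda>(al,be). evv (vsub (vsub q (vsmul al onesv)) (vsmul be u))) pairs"

lemma tab_ok: "list_all (\<lambda>(q,g,ents). list_all (\<lambda>(s0,r0,w). okw q g s0 r0 w) ents \<and>
     map (\<lambda>(s0,r0,w). (s0,r0)) ents = pairs \<and> (classA uA q \<or> classA uA' q)) wtab"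
  by code_simp

lemma class_ok: "list_all (\<lambda>q. (4 dvd fst (zdot q q) \<and> 4 dvd snd (zdot q q) \<and> q \<noteq> ((0,0),(0,0),(0,0),(0,0))) \<longrightarrow> q \<in> set goods) allq"
  by code_simp

lemma S_core:
  fixes y0 y1 b g ones :: "real^4"
  assumes y1: "O4 y1" and b: "O4 b" and g: "O4 g" and ones: "O4 ones"
    and be: "be \<in> Ztau" and ga: "ga \<in> Ztau"
    and e: "O4 ((1/2) *\<^sub>R (b - be *\<^sub>R ones - ga *\<^sub>R g))"
    and s0: "(y1 \<bullet> ones - s0) / 2 \<in> Ztau" and r0: "(y1 \<bullet> g - r0) / 2 \<in> Ztau"
  shows "O4 ((1/2) *\<^sub>R ((y0 + 2 *\<^sub>R y1 - (((y0 + 2 *\<^sub>R y1) \<bullet> b) / 2) *\<^sub>R b)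
            - (y0 - ((y0 \<bullet> b) / 2 + be * s0 + ga * r0) *\<^sub>R b)))"
proof -
  define ev where "ev = (1/2) *\<^sub>R (b - be *\<^sub>R ones - ga *\<^sub>R g)"
  have bdec: "b = be *\<^sub>R ones + ga *\<^sub>R g + 2 *\<^sub>R ev" unfolding ev_def by (simp add: algebra_simps)
  define F where "F = be * ((y1 \<bullet> ones - s0) / 2) + ga * ((y1 \<bullet> g - r0) / 2) + y1 \<bullet> ev"
  have FZ: "F \<in> Ztau" unfolding F_def
    by (intro Ztau_add Ztau_mul be ga s0 r0 O4_inner y1) (use e ev_def in simp)
  have yb: "y1 \<bullet> b = be * (y1 \<bullet> ones) + ga * (y1 \<bullet> g) + 2 * (y1 \<bullet> ev)"
    by (subst bdec) (simp add: inner_add_right)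
  have "((y0 + 2 *\<^sub>R y1) \<bullet> b) / 2 = (y0 \<bullet> b) / 2 + y1 \<bullet> b"
    by (simp add: inner_add_left)
  also have "\<dots> = (y0 \<bullet> b) / 2 + be * s0 + ga * r0 + 2 * F"
    unfolding yb F_def by (simp add: field_simps)
  finally have eq: "((y0 + 2 *\<^sub>R y1) \<bullet> b) / 2 = (y0 \<bullet> b) / 2 + be * s0 + ga * r0 + 2 * F" .
  have "(1/2) *\<^sub>R ((y0 + 2 *\<^sub>R y1 - (((y0 + 2 *\<^sub>R y1) \<bullet> b) / 2) *\<^sub>R b)
            - (y0 - ((y0 \<bullet> b) / 2 + be * s0 + ga * r0) *\<^sub>R b)) = y1 - F *\<^sub>R b"
    unfolding eq by (simp add: algebra_simps)
  then show ?thesis using FZ y1 b by (simp add: O4_sub O4_scale)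
qed

definition NS :: "real^4 \<Rightarrow> bool" where
  "NS y \<longleftrightarrow> \<not> (\<exists>c\<in>Ztau. O4 ((1/2) *\<^sub>R (y - c *\<^sub>R rvec onesv)))"

lemma evz_sub_m2: "evz (zsub x (m2 x))"
  by (cases x) (simp add: minus_mod_eq_mult_div[symmetric])

lemma rv_zhalf: "evz d \<Longrightarrow> rv (zhalf d) = rv d / 2"
  by (cases d) (auto simp: rv_def elim!: evenE)

lemma allq_mem: "m2v p \<in> set allq"
proof -
  obtain a b c d where p: "p = (a,b,c,d)" by (cases p)
  have "m2 a \<in> set reps" "m2 b \<in> set reps" "m2 c \<in> set reps" "m2 d \<in> set reps"
    using m2_reps unfolding reps_def by auto
  then show ?thesis unfolding p allq_def by auto
qed

lemma m2_pairs: "(m2 x, m2 y) \<in> set pairs"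
  using m2_reps[of x] m2_reps[of y] unfolding pairs_def reps_def by auto

lemma zmul_one: "zmul c (1,0) = c" by (cases c) simp

lemma spanl_of_even: "evv (vsub w (vsmul c onesv)) \<Longrightarrow> m2v w \<in> set spanl"
proof -
  assume h: "evv (vsub w (vsmul c onesv))"
  obtain a b d e where w: "w = (a,b,d,e)" by (cases w)
  have "m2 a = m2 c" "m2 b = m2 c" "m2 d = m2 c" "m2 e = m2 c"
    using h unfolding w onesv_def by (auto simp: zmul_one intro: m2_eq_if_even_diff)
  moreover have "m2 c \<in> set reps" using m2_reps unfolding reps_def by auto
  ultimately show ?thesis unfolding w spanl_def by auto
qed

lemma zero_rvec: "rvec ((0,0),(0,0),(0,0),(0,0)) = 0"
  by (simp add: vec4_eq_iff rv_def)

lemma entry_of_goods: assumes "q \<in> set goods"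
  obtains g ents where "(q,g,ents) \<in> set wtab"
  using assms unfolding goods_def by auto

lemma table_data:
  assumes "O4 y" "(y \<bullet> y) / 4 \<in> Ztau" "\<not> O4 ((1/2) *\<^sub>R y)"
  obtains p g ents where "y = rvec p" "(m2v p, g, ents) \<in> set wtab"
proof -
  obtain p where yp: "y = rvec p" using assms(1) O4_iff by blast
  define q where "q = m2v p"
  define r where "r = d2v p"
  have ysplit: "y = rvec q + 2 *\<^sub>R rvec r" unfolding q_def r_def yp by (rule rvec_split)
  have qnz: "q \<noteq> ((0,0),(0,0),(0,0),(0,0))"
  proof
    assume "q = ((0,0),(0,0),(0,0),(0,0))"
    then have "(1/2) *\<^sub>R y = rvec r" using ysplit zero_rvec by simp
    then show False using assms(3) by simp
  qed
  have "y \<bullet> y = rvec q \<bullet> rvec q + 4 * (rvec q \<bullet> rvec r + rvec r \<bullet> rvec r)"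
    unfolding ysplit by (simp add: inner_add_left inner_add_right inner_commute algebra_simps)
  then have "(rvec q \<bullet> rvec q) / 4 = (y \<bullet> y) / 4 - (rvec q \<bullet> rvec r + rvec r \<bullet> rvec r)" by (simp add: field_simps)
  also have "\<dots> \<in> Ztau" using assms(2) by (intro Ztau_sub Ztau_add O4_inner) auto
  finally have "rv (zdot q q) / 4 \<in> Ztau" by (simp add: rvec_dot)
  then have "4 dvd fst (zdot q q) \<and> 4 dvd snd (zdot q q)" by (simp add: rv_div4)
  moreover have "q \<in> set allq" unfolding q_def by (rule allq_mem)
  ultimately have "q \<in> set goods" using class_ok qnz by (auto simp: list_all_iff)
  then obtain g ents where "(q,g,ents) \<in> set wtab" by (rule entry_of_goods)
  then show ?thesis using that yp q_def by blast
qed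

lemma step:
  assumes A: "O4 y" "(y \<bullet> y) / 4 \<in> Ztau" "\<not> O4 ((1/2) *\<^sub>R y)"
  shows "\<exists>b\<in>set allB. O4 ((1/2) *\<^sub>R (y - ((y \<bullet> rvec b) / 2) *\<^sub>R rvec b)) \<or>
     (\<not> NS y \<and> O4 (y - ((y \<bullet> rvec b) / 2) *\<^sub>R rvec b) \<and> NS (y - ((y \<bullet> rvec b) / 2) *\<^sub>R rvec b))"
proof -
  obtain p g ents where yp: "y = rvec p" and ent: "(m2v p, g, ents) \<in> set wtab"
    using table_data[OF A] by blast
  define q where "q = m2v p"
  define r where "r = d2v p"
  have ysplit: "y = rvec q + 2 *\<^sub>R rvec r" unfolding q_def r_def yp by (rule rvec_split)
  have T: "list_all (\<lambda>(s0,r0,w). okw q g s0 r0 w) ents" "map (\<lambda>(s0,r0,w). (s0,r0)) ents = pairs"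
    using tab_ok ent unfolding q_def by (auto simp: list_all_iff)
  define s0 where "s0 = m2 (zdot r onesv)"
  define r0 where "r0 = m2 (zdot r g)"
  have "(s0,r0) \<in> set pairs" unfolding s0_def r0_def by (rule m2_pairs)
  then have "(s0,r0) \<in> set (map (\<lambda>(s0,r0,w). (s0,r0)) ents)" using T(2) by simp
  then obtain w where wm: "(s0,r0,w) \<in> set ents" by auto
  then have okw: "okw q g s0 r0 w" using T(1) by (auto simp: list_all_iff)
  obtain b be ga k where w: "w = (b,be,ga,k)" by (cases w)
  define E0 where "E0 = zadd (zhalf (zdot q b)) (zadd (zmul be s0) (zmul ga r0))"
  define wl where "wl = vsub q (vsmul E0 b)"
  have bB: "b \<in> set allB" and evb: "evv (vsub (vsub b (vsmul be onesv)) (vsmul ga g))"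
    and evd: "evz (zdot q b)"
    and K: "(k = 1 \<and> evv wl) \<or> (k = 2 \<and> q \<in> set spanl \<and> m2v wl \<notin> set spanl)"
    using okw unfolding w E0_def wl_def by (auto simp: Let_def)
  have e: "O4 ((1/2) *\<^sub>R (rvec b - rv be *\<^sub>R rvec onesv - rv ga *\<^sub>R rvec g))"
    using evb by (simp add: O4_half_rvec[symmetric] rvec_sub rvec_smul)
  have s0c: "(rvec r \<bullet> rvec onesv - rv s0) / 2 \<in> Ztau"
    unfolding s0_def rvec_dot rv_sub[symmetric] rv_div2 by (rule evz_sub_m2)
  have r0c: "(rvec r \<bullet> rvec g - rv r0) / 2 \<in> Ztau"
    unfolding r0_def rvec_dot rv_sub[symmetric] rv_div2 by (rule evz_sub_m2)
  have core: "O4 ((1/2) *\<^sub>R ((rvec q + 2 *\<^sub>R rvec r - (((rvec q + 2 *\<^sub>R rvec r) \<bullet> rvec b) / 2) *\<^sub>R rvec b)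
            - (rvec q - ((rvec q \<bullet> rvec b) / 2 + rv be * rv s0 + rv ga * rv r0) *\<^sub>R rvec b)))"
    by (rule S_core[OF O4_rvec O4_rvec O4_rvec O4_rvec rv_Ztau rv_Ztau e s0c r0c])
  have rvE0: "rv E0 = (rvec q \<bullet> rvec b) / 2 + rv be * rv s0 + rv ga * rv r0"
    unfolding E0_def by (simp add: rv_add rv_mul rv_zhalf[OF evd] rvec_dot)
  define z where "z = y - ((y \<bullet> rvec b) / 2) *\<^sub>R rvec b"
  have W: "rvec wl = rvec q - ((rvec q \<bullet> rvec b) / 2 + rv be * rv s0 + rv ga * rv r0) *\<^sub>R rvec b"
    unfolding wl_def by (simp add: rvec_sub rvec_smul rvE0)
  have core': "O4 ((1/2) *\<^sub>R (z - rvec wl))" using core unfolding W z_def ysplit .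
  have zW: "z = 2 *\<^sub>R ((1/2) *\<^sub>R (z - rvec wl)) + rvec wl" by simp
  from K show ?thesis
  proof
    assume "k = 1 \<and> evv wl"
    then have "O4 ((1/2) *\<^sub>R rvec wl)" by (simp add: O4_half_rvec)
    then have "O4 ((1/2) *\<^sub>R (z - rvec wl) + (1/2) *\<^sub>R rvec wl)" using core' by (rule O4_add[rotated])
    then have "O4 ((1/2) *\<^sub>R z)" by (simp add: algebra_simps)
    then show ?thesis using bB unfolding z_def by blast
  next
    assume k2: "k = 2 \<and> q \<in> set spanl \<and> m2v wl \<notin> set spanl"
    then obtain c where c: "c \<in> set reps" "q = (c,c,c,c)" unfolding spanl_def by auto
    have "y - rv c *\<^sub>R rvec onesv = rvec (vsub q (vsmul c onesv)) + 2 *\<^sub>R rvec r"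
      unfolding ysplit by (simp add: rvec_sub rvec_smul)
    also have "vsub q (vsmul c onesv) = ((0,0),(0,0),(0,0),(0,0))"
      using c(2) by (cases c) (simp add: onesv_def)
    finally have "(1/2) *\<^sub>R (y - rv c *\<^sub>R rvec onesv) = rvec r" by (simp del: rvec.simps add: zero_rvec)
    then have nNS: "\<not> NS y" unfolding NS_def using rv_Ztau[of c] O4_rvec[of r] by metis
    have Oz: "O4 z" using zW core' by (metis O4_add O4_rvec O4_scale Ztau_2)
    have NSz: "NS z"
    proof (rule ccontr)
      assume "\<not> NS z"
      then obtain c' where c': "c' \<in> Ztau" "O4 ((1/2) *\<^sub>R (z - c' *\<^sub>R rvec onesv))" unfolding NS_def by blast
      obtain cc where cc: "c' = rv cc" using c'(1) Ztau_iff by blast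
      have "O4 ((1/2) *\<^sub>R (z - c' *\<^sub>R rvec onesv) - (1/2) *\<^sub>R (z - rvec wl))"
        using c'(2) core' by (rule O4_sub)
      moreover have "(1/2) *\<^sub>R (z - c' *\<^sub>R rvec onesv) - (1/2) *\<^sub>R (z - rvec wl)
          = (1/2) *\<^sub>R rvec (vsub wl (vsmul cc onesv))"
        by (simp add: rvec_sub rvec_smul cc algebra_simps)
      ultimately have "evv (vsub wl (vsmul cc onesv))" by (simp add: O4_half_rvec)
      then have "m2v wl \<in> set spanl" by (rule spanl_of_even)
      then show False using k2 by simp
    qed
    show ?thesis using bB nNS Oz NSz unfolding z_def by blast
  qed
qed

lemma perm_in_DeltaGen:
  assumes "x = (\<chi> j. s j * (vector [0, 1/2, t'/2, t/2] :: real^4) $ (Transposition.transpose i1 i2 \<circ> Transposition.transpose i3 i4) j)"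
    "(i1 = i2) = (i3 = i4)" "\<forall>j. s j \<in> {-1::real, 1}"
  shows "x \<in> DeltaGen t t'"
proof -
  let ?p = "Transposition.transpose i1 i2 \<circ> Transposition.transpose i3 i4"
  have pp: "?p permutes (UNIV :: 4 set)"
    by (intro permutes_compose permutes_swap_id) auto
  have ev: "evenperm ?p"
    using assms(2) by (simp add: evenperm_comp permutation_swap_id evenperm_swap)
  show ?thesis unfolding DeltaGen_def using pp ev assms(1,3) by blast
qed

lemma perm_in_Delta:
  assumes "x = (\<chi> j. s j * (vector [0, 1/2, tau'/2, tau/2] :: real^4) $ (Transposition.transpose i1 i2 \<circ> Transposition.transpose i3 i4) j)"
    "(i1 = i2) = (i3 = i4)" "\<forall>j. s j \<in> {-1::real, 1}"
  shows "x \<in> Delta \<union> Delta'"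
  using perm_in_DeltaGen[OF assms] unfolding Delta_def by blast

lemma perm_in_Delta':
  assumes "x = (\<chi> j. s j * (vector [0, 1/2, tau/2, tau'/2] :: real^4) $ (Transposition.transpose i1 i2 \<circ> Transposition.transpose i3 i4) j)"
    "(i1 = i2) = (i3 = i4)" "\<forall>j. s j \<in> {-1::real, 1}"
  shows "x \<in> Delta \<union> Delta'"
  using perm_in_DeltaGen[OF assms] unfolding Delta'_def by blast

lemma half_in_Delta:
  assumes "\<forall>j. x $ j \<in> {-1/2, 1/2::real}"
  shows "x \<in> Delta \<union> Delta'"
  using assms unfolding Delta_def DeltaGen_def by blast

lemma bmem0: "(1/2) *\<^sub>R rvec ((-1,0),(0,0),(0,-1),(1,-1)) \<in> Delta \<union> Delta'"
  by (rule perm_in_Delta[of _ "\<lambda>j. (vector [-1,1,-1,1] :: real^4) $ j" 1 2 3 4]) (simp_all add: vec4_eq_iff rv_def tau'_eq forall_4)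

lemma bmem1: "(1/2) *\<^sub>R rvec ((-1,0),(0,-1),(-1,1),(0,0)) \<in> Delta \<union> Delta'"
  by (rule perm_in_Delta[of _ "\<lambda>j. (vector [-1,-1,-1,1] :: real^4) $ j" 1 2 2 4]) (simp_all add: vec4_eq_iff rv_def tau'_eq forall_4)

lemma bmem2: "(1/2) *\<^sub>R rvec ((-1,0),(0,0),(1,-1),(0,-1)) \<in> Delta \<union> Delta'"
  by (rule perm_in_Delta'[of _ "\<lambda>j. (vector [-1,1,1,-1] :: real^4) $ j" 1 2 3 4]) (simp_all add: vec4_eq_iff rv_def tau'_eq forall_4)

lemma bmem3: "(1/2) *\<^sub>R rvec ((0,0),(-1,0),(0,1),(-1,1)) \<in> Delta \<union> Delta'"
  by (rule perm_in_Delta'[of _ "\<lambda>j. (vector [1,-1,1,-1] :: real^4) $ j" 1 1 2 2]) (simp_all add: vec4_eq_iff rv_def tau'_eq forall_4)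

lemma bmem4: "(1/2) *\<^sub>R rvec ((-1,0),(0,0),(0,1),(1,-1)) \<in> Delta \<union> Delta'"
  by (rule perm_in_Delta[of _ "\<lambda>j. (vector [-1,1,1,1] :: real^4) $ j" 1 2 3 4]) (simp_all add: vec4_eq_iff rv_def tau'_eq forall_4)

lemma bmem5: "(1/2) *\<^sub>R rvec ((-1,0),(-1,1),(0,0),(0,1)) \<in> Delta \<union> Delta'"
  by (rule perm_in_Delta[of _ "\<lambda>j. (vector [-1,-1,1,1] :: real^4) $ j" 1 2 2 3]) (simp_all add: vec4_eq_iff rv_def tau'_eq forall_4)

lemma bmem6: "(1/2) *\<^sub>R rvec ((-1,0),(0,0),(0,-1),(-1,1)) \<in> Delta \<union> Delta'"
  by (rule perm_in_Delta[of _ "\<lambda>j. (vector [-1,1,-1,-1] :: real^4) $ j" 1 2 3 4]) (simp_all add: vec4_eq_iff rv_def tau'_eq forall_4)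

lemma bmem7: "(1/2) *\<^sub>R rvec ((-1,0),(0,0),(1,-1),(0,1)) \<in> Delta \<union> Delta'"
  by (rule perm_in_Delta'[of _ "\<lambda>j. (vector [-1,1,1,1] :: real^4) $ j" 1 2 3 4]) (simp_all add: vec4_eq_iff rv_def tau'_eq forall_4)

lemma bmem8: "(1/2) *\<^sub>R rvec ((0,0),(-1,0),(-1,1),(0,1)) \<in> Delta \<union> Delta'"
  by (rule perm_in_Delta[of _ "\<lambda>j. (vector [1,-1,-1,1] :: real^4) $ j" 1 1 2 2]) (simp_all add: vec4_eq_iff rv_def tau'_eq forall_4)

lemma bmem9: "(1/2) *\<^sub>R rvec ((-1,0),(1,-1),(0,0),(0,-1)) \<in> Delta \<union> Delta'"
  by (rule perm_in_Delta[of _ "\<lambda>j. (vector [-1,1,1,-1] :: real^4) $ j" 1 2 2 3]) (simp_all add: vec4_eq_iff rv_def tau'_eq forall_4)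

lemma bmem10: "(1/2) *\<^sub>R rvec ((0,0),(-1,0),(1,-1),(0,1)) \<in> Delta \<union> Delta'"
  by (rule perm_in_Delta[of _ "\<lambda>j. (vector [1,-1,1,1] :: real^4) $ j" 1 1 2 2]) (simp_all add: vec4_eq_iff rv_def tau'_eq forall_4)

lemma bmem11: "(1/2) *\<^sub>R rvec ((-1,0),(1,-1),(0,0),(0,1)) \<in> Delta \<union> Delta'"
  by (rule perm_in_Delta[of _ "\<lambda>j. (vector [-1,1,1,1] :: real^4) $ j" 1 2 2 3]) (simp_all add: vec4_eq_iff rv_def tau'_eq forall_4)

lemma bmem12: "(1/2) *\<^sub>R rvec ((-1,0),(0,-1),(0,0),(1,-1)) \<in> Delta \<union> Delta'"
  by (rule perm_in_Delta'[of _ "\<lambda>j. (vector [-1,-1,1,1] :: real^4) $ j" 1 2 2 3]) (simp_all add: vec4_eq_iff rv_def tau'_eq forall_4)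

lemma bmem13: "(1/2) *\<^sub>R rvec ((-1,0),(0,0),(-1,1),(0,1)) \<in> Delta \<union> Delta'"
  by (rule perm_in_Delta'[of _ "\<lambda>j. (vector [-1,1,-1,1] :: real^4) $ j" 1 2 3 4]) (simp_all add: vec4_eq_iff rv_def tau'_eq forall_4)

lemma bmem14: "(1/2) *\<^sub>R rvec ((-1,0),(-1,1),(0,1),(0,0)) \<in> Delta \<union> Delta'"
  by (rule perm_in_Delta'[of _ "\<lambda>j. (vector [-1,-1,1,1] :: real^4) $ j" 1 2 2 4]) (simp_all add: vec4_eq_iff rv_def tau'_eq forall_4)

lemma bmem15: "(1/2) *\<^sub>R rvec ((-1,0),(0,1),(-1,1),(0,0)) \<in> Delta \<union> Delta'"
  by (rule perm_in_Delta[of _ "\<lambda>j. (vector [-1,1,-1,1] :: real^4) $ j" 1 2 2 4]) (simp_all add: vec4_eq_iff rv_def tau'_eq forall_4)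

lemma bmem16: "(1/2) *\<^sub>R rvec ((-1,0),(-1,1),(0,0),(0,-1)) \<in> Delta \<union> Delta'"
  by (rule perm_in_Delta[of _ "\<lambda>j. (vector [-1,-1,1,-1] :: real^4) $ j" 1 2 2 3]) (simp_all add: vec4_eq_iff rv_def tau'_eq forall_4)

lemma bmem17: "(1/2) *\<^sub>R rvec ((0,0),(-1,0),(1,-1),(0,-1)) \<in> Delta \<union> Delta'"
  by (rule perm_in_Delta[of _ "\<lambda>j. (vector [1,-1,1,-1] :: real^4) $ j" 1 1 2 2]) (simp_all add: vec4_eq_iff rv_def tau'_eq forall_4)

lemma bmem18: "(1/2) *\<^sub>R rvec ((-1,0),(-1,0),(-1,0),(-1,0)) \<in> Delta \<union> Delta'"
  by (rule half_in_Delta) (simp add: rv_def forall_4)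

lemma bmem19: "(1/2) *\<^sub>R rvec ((-1,0),(1,-1),(0,-1),(0,0)) \<in> Delta \<union> Delta'"
  by (rule perm_in_Delta'[of _ "\<lambda>j. (vector [-1,1,-1,1] :: real^4) $ j" 1 2 2 4]) (simp_all add: vec4_eq_iff rv_def tau'_eq forall_4)

lemma bmem20: "(1/2) *\<^sub>R rvec ((0,0),(-1,0),(0,1),(1,-1)) \<in> Delta \<union> Delta'"
  by (rule perm_in_Delta'[of _ "\<lambda>j. (vector [1,-1,1,1] :: real^4) $ j" 1 1 2 2]) (simp_all add: vec4_eq_iff rv_def tau'_eq forall_4)

lemma bmem21: "(1/2) *\<^sub>R rvec ((-1,0),(0,0),(0,1),(-1,1)) \<in> Delta \<union> Delta'"
  by (rule perm_in_Delta[of _ "\<lambda>j. (vector [-1,1,1,-1] :: real^4) $ j" 1 2 3 4]) (simp_all add: vec4_eq_iff rv_def tau'_eq forall_4)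

lemma bmem22: "(1/2) *\<^sub>R rvec ((-1,0),(1,-1),(0,1),(0,0)) \<in> Delta \<union> Delta'"
  by (rule perm_in_Delta'[of _ "\<lambda>j. (vector [-1,1,1,1] :: real^4) $ j" 1 2 2 4]) (simp_all add: vec4_eq_iff rv_def tau'_eq forall_4)

lemma bmem23: "(1/2) *\<^sub>R rvec ((-1,0),(0,-1),(1,-1),(0,0)) \<in> Delta \<union> Delta'"
  by (rule perm_in_Delta[of _ "\<lambda>j. (vector [-1,-1,1,1] :: real^4) $ j" 1 2 2 4]) (simp_all add: vec4_eq_iff rv_def tau'_eq forall_4)

lemma bmem24: "(1/2) *\<^sub>R rvec ((-1,0),(-1,1),(0,-1),(0,0)) \<in> Delta \<union> Delta'"
  by (rule perm_in_Delta'[of _ "\<lambda>j. (vector [-1,-1,-1,1] :: real^4) $ j" 1 2 2 4]) (simp_all add: vec4_eq_iff rv_def tau'_eq forall_4)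

lemma bmem25: "(1/2) *\<^sub>R rvec ((-1,0),(0,1),(1,-1),(0,0)) \<in> Delta \<union> Delta'"
  by (rule perm_in_Delta[of _ "\<lambda>j. (vector [-1,1,1,1] :: real^4) $ j" 1 2 2 4]) (simp_all add: vec4_eq_iff rv_def tau'_eq forall_4)

lemma bmem26: "(1/2) *\<^sub>R rvec ((-1,0),(0,1),(0,0),(1,-1)) \<in> Delta \<union> Delta'"
  by (rule perm_in_Delta'[of _ "\<lambda>j. (vector [-1,1,1,1] :: real^4) $ j" 1 2 2 3]) (simp_all add: vec4_eq_iff rv_def tau'_eq forall_4)

lemma bmem27: "(1/2) *\<^sub>R rvec ((-1,0),(0,0),(-1,1),(0,-1)) \<in> Delta \<union> Delta'"
  by (rule perm_in_Delta'[of _ "\<lambda>j. (vector [-1,1,-1,-1] :: real^4) $ j" 1 2 3 4]) (simp_all add: vec4_eq_iff rv_def tau'_eq forall_4)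

lemma bmem28: "(1/2) *\<^sub>R rvec ((0,0),(-1,0),(-1,1),(0,-1)) \<in> Delta \<union> Delta'"
  by (rule perm_in_Delta[of _ "\<lambda>j. (vector [1,-1,-1,-1] :: real^4) $ j" 1 1 2 2]) (simp_all add: vec4_eq_iff rv_def tau'_eq forall_4)

lemma bmem29: "(1/2) *\<^sub>R rvec ((-1,0),(0,1),(0,0),(-1,1)) \<in> Delta \<union> Delta'"
  by (rule perm_in_Delta'[of _ "\<lambda>j. (vector [-1,1,1,-1] :: real^4) $ j" 1 2 2 3]) (simp_all add: vec4_eq_iff rv_def tau'_eq forall_4)

lemma bmem30: "(1/2) *\<^sub>R rvec ((0,0),(-1,0),(0,-1),(-1,1)) \<in> Delta \<union> Delta'"
  by (rule perm_in_Delta'[of _ "\<lambda>j. (vector [1,-1,-1,-1] :: real^4) $ j" 1 1 2 2]) (simp_all add: vec4_eq_iff rv_def tau'_eq forall_4)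

lemma bmem31: "(1/2) *\<^sub>R rvec ((-1,0),(-1,0),(-1,0),(1,0)) \<in> Delta \<union> Delta'"
  by (rule half_in_Delta) (simp add: rv_def forall_4)

lemma bmem32: "(1/2) *\<^sub>R rvec ((-1,0),(0,-1),(0,0),(-1,1)) \<in> Delta \<union> Delta'"
  by (rule perm_in_Delta'[of _ "\<lambda>j. (vector [-1,-1,1,-1] :: real^4) $ j" 1 2 2 3]) (simp_all add: vec4_eq_iff rv_def tau'_eq forall_4)

lemma bmem33: "(1/2) *\<^sub>R rvec ((0,0),(-1,0),(0,-1),(1,-1)) \<in> Delta \<union> Delta'"
  by (rule perm_in_Delta'[of _ "\<lambda>j. (vector [1,-1,-1,1] :: real^4) $ j" 1 1 2 2]) (simp_all add: vec4_eq_iff rv_def tau'_eq forall_4)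

lemma allB_Delta_list: "list_all (\<lambda>b. (1/2) *\<^sub>R rvec b \<in> Delta \<union> Delta') allB"
  unfolding allB_def list.pred_inject by (intro conjI TrueI list.pred_inject(1) bmem0 bmem1 bmem2 bmem3 bmem4 bmem5 bmem6 bmem7 bmem8 bmem9 bmem10 bmem11 bmem12 bmem13 bmem14 bmem15 bmem16 bmem17 bmem18 bmem19 bmem20 bmem21 bmem22 bmem23 bmem24 bmem25 bmem26 bmem27 bmem28 bmem29 bmem30 bmem31 bmem32 bmem33)

lemma allB_Delta: "b \<in> set allB \<Longrightarrow> (1/2) *\<^sub>R rvec b \<in> Delta \<union> Delta'"
  using allB_Delta_list by (simp add: list_all_iff)

lemma int_sq_cases: "(x::int) = 0 \<or> x * x \<ge> 1"
proof (cases "x = 0")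
  case False
  then have "\<bar>x\<bar> \<ge> 1" by linarith
  then have "\<bar>x\<bar> * \<bar>x\<bar> \<ge> 1 * 1" by (intro mult_mono) auto
  then show ?thesis by (simp add: abs_mult[symmetric])
qed simp

lemma int_sq_nonneg: "(x::int) * x \<ge> 0" by simp

lemma unit_int:
  fixes a1 b1 a2 b2 a3 b3 a4 b4 :: int
  assumes s1: "a1*a1 + b1*b1 + (a2*a2 + b2*b2) + (a3*a3 + b3*b3 + (a4*a4 + b4*b4)) = 1"
    and s2: "a1*b1 + b1*a1 + b1*b1 + (a2*b2 + b2*a2 + b2*b2) + (a3*b3 + b3*a3 + b3*b3 + (a4*b4 + b4*a4 + b4*b4)) = 0"
  shows "b1 = 0 \<and> b2 = 0 \<and> b3 = 0 \<and> b4 = 0 \<and>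
    ((a1*a1 = 1 \<and> a2 = 0 \<and> a3 = 0 \<and> a4 = 0) \<or> (a2*a2 = 1 \<and> a1 = 0 \<and> a3 = 0 \<and> a4 = 0) \<or>
     (a3*a3 = 1 \<and> a1 = 0 \<and> a2 = 0 \<and> a4 = 0) \<or> (a4*a4 = 1 \<and> a1 = 0 \<and> a2 = 0 \<and> a3 = 0))"
proof -
  note q = int_sq_cases[of a1] int_sq_cases[of a2] int_sq_cases[of a3] int_sq_cases[of a4]
    int_sq_cases[of b1] int_sq_cases[of b2] int_sq_cases[of b3] int_sq_cases[of b4]
  note n = int_sq_nonneg[of a1] int_sq_nonneg[of a2] int_sq_nonneg[of a3] int_sq_nonneg[of a4]
    int_sq_nonneg[of b1] int_sq_nonneg[of b2] int_sq_nonneg[of b3] int_sq_nonneg[of b4]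
  have b: "b1 = 0 \<and> b2 = 0 \<and> b3 = 0 \<and> b4 = 0"
  proof (rule ccontr)
    assume "\<not> ?thesis"
    then show False using q n s1 s2 by (smt (verit) mult_eq_0_iff mult_zero_left mult_zero_right)
  qed
  then show ?thesis using q n s1 by auto
qed

lemma S0_Delta: "x \<in> S0 \<Longrightarrow> x \<in> Delta"
  unfolding S0_def Delta_def DeltaGen_def by blast

lemma unit_O4:
  assumes "O4 y" "y \<bullet> y = 1"
  shows "y \<in> S0"
proof -
  obtain p where yp: "y = rvec p" using assms(1) O4_iff by blast
  obtain a1 b1 a2 b2 a3 b3 a4 b4 where p: "p = ((a1,b1),(a2,b2),(a3,b3),(a4,b4))"
    by (metis prod.exhaust)
  have "rv (zdot p p) = rv (1,0)" using assms(2) yp by (simp add: rvec_dot rv_def)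
  then have "zdot p p = (1,0)" by (rule rv_inj)
  then have "a1*a1 + b1*b1 + (a2*a2 + b2*b2) + (a3*a3 + b3*b3 + (a4*a4 + b4*b4)) = 1"
    "a1*b1 + b1*a1 + b1*b1 + (a2*b2 + b2*a2 + b2*b2) + (a3*b3 + b3*a3 + b3*b3 + (a4*b4 + b4*a4 + b4*b4)) = 0"
    unfolding p by simp_all
  note u = unit_int[OF this]
  have sq1: "a*a = 1 \<Longrightarrow> (of_int a::real) \<in> {-1,1}" for a :: int
  proof -
    assume "a*a = 1"
    then have "a = 1 \<or> a = -1" using zmult_eq_1_iff zero_less_mult_iff by (smt (verit) int_sq_cases mult_cancel_right1 square_eq_1_iff)
    then show ?thesis by auto
  qed
  have yv: "y = vector [of_int a1, of_int a2, of_int a3, of_int a4]"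
    using u unfolding yp p by (simp add: rv_def)
  from u consider "a1*a1 = 1 \<and> a2 = 0 \<and> a3 = 0 \<and> a4 = 0" | "a2*a2 = 1 \<and> a1 = 0 \<and> a3 = 0 \<and> a4 = 0"
     | "a3*a3 = 1 \<and> a1 = 0 \<and> a2 = 0 \<and> a4 = 0" | "a4*a4 = 1 \<and> a1 = 0 \<and> a2 = 0 \<and> a3 = 0" by blast
  then show ?thesis
  proof cases
    case 1
    then have "y = (\<chi> j. if j = 1 then of_int a1 else 0)" unfolding yv by (simp add: vec4_eq_iff)
    then show ?thesis using sq1 1 unfolding S0_def by blast
  next
    case 2
    then have "y = (\<chi> j. if j = 2 then of_int a2 else 0)" unfolding yv by (simp add: vec4_eq_iff)
    then show ?thesis using sq1 2 unfolding S0_def by blast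
  next
    case 3
    then have "y = (\<chi> j. if j = 3 then of_int a3 else 0)" unfolding yv by (simp add: vec4_eq_iff)
    then show ?thesis using sq1 3 unfolding S0_def by blast
  next
    case 4
    then have "y = (\<chi> j. if j = 4 then of_int a4 else 0)" unfolding yv by (simp add: vec4_eq_iff)
    then show ?thesis using sq1 4 unfolding S0_def by blast
  qed
qed

lemma cong2_iff: "cong2 y z \<longleftrightarrow> O4 ((1/2) *\<^sub>R (y - z))"
  unfolding cong2_def O4_def by simp

lemma classify:
  assumes A: "O4 y" "(y \<bullet> y) / 4 \<in> Ztau" "\<not> O4 ((1/2) *\<^sub>R y)"
  shows "inAred tau tau' y \<or> inAred tau' tau y"
proof -
  obtain p g ents where yp: "y = rvec p" and ent: "(m2v p, g, ents) \<in> set wtab"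
    using table_data[OF A] by blast
  define q where "q = m2v p"
  define r where "r = d2v p"
  have ysplit: "y = rvec q + 2 *\<^sub>R rvec r" unfolding q_def r_def yp by (rule rvec_split)
  have C: "classA uA q \<or> classA uA' q"
    using tab_ok ent unfolding q_def by (auto simp: list_all_iff)
  have n0: "\<not> cong2 y 0" using A(3) by (simp add: cong2_iff)
  have ones: "vector [1,1,1,1] = rvec onesv" by (simp add: onesv_def rv_def)
  have gen: "\<exists>\<alpha>\<in>Ztau. \<exists>\<beta>\<in>Ztau. cong2 y (\<alpha> *\<^sub>R vector [1,1,1,1] + \<beta> *\<^sub>R rvec u)"
    if "classA u q" for u
  proof -
    have "\<exists>al be. evv (vsub (vsub q (vsmul al onesv)) (vsmul be u))"
      using that unfolding classA_def list_ex_iff by auto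
    then obtain al be where ab: "evv (vsub (vsub q (vsmul al onesv)) (vsmul be u))" by blast
    have "(1/2) *\<^sub>R (y - (rv al *\<^sub>R vector [1,1,1,1] + rv be *\<^sub>R rvec u))
       = (1/2) *\<^sub>R rvec (vsub (vsub q (vsmul al onesv)) (vsmul be u)) + rvec r"
      unfolding ysplit ones by (simp add: rvec_sub rvec_smul algebra_simps)
    moreover have "O4 ((1/2) *\<^sub>R rvec (vsub (vsub q (vsmul al onesv)) (vsmul be u)) + rvec r)"
      using ab by (intro O4_add) (simp_all add: O4_half_rvec)
    ultimately show ?thesis unfolding cong2_iff by (metis rv_Ztau)
  qed
  have uA_eq: "rvec uA = vector [0,1,tau',tau]" by (simp add: uA_def rv_def tau'_eq)
  have uA'_eq: "rvec uA' = vector [0,1,tau,tau']" by (simp add: uA'_def rv_def tau'_eq)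
  from C show ?thesis
  proof
    assume "classA uA q"
    then show ?thesis using gen n0 uA_eq unfolding inAred_def by metis
  next
    assume "classA uA' q"
    then show ?thesis using gen n0 uA'_eq unfolding inAred_def by metis
  qed
qed

lemma Rring_iff: "r \<in> Rring \<longleftrightarrow> (\<exists>z\<in>Ztau. \<exists>n. r = z / 2^n)"
  unfolding Rring_def Ztau_def by blast

lemma Ztau_Rring: "z \<in> Ztau \<Longrightarrow> z \<in> Rring"
  unfolding Rring_iff by (rule bexI[of _ z]) (auto intro: exI[of _ 0])

lemma Rring_add: "x \<in> Rring \<Longrightarrow> y \<in> Rring \<Longrightarrow> x + y \<in> Rring"
proof -
  assume "x \<in> Rring" "y \<in> Rring"
  then obtain z1 n z2 m where z: "z1 \<in> Ztau" "x = z1 / 2^n" "z2 \<in> Ztau" "y = z2 / 2^m"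
    unfolding Rring_iff by blast
  have "x + y = (z1 * 2^m + z2 * 2^n) / 2^(n+m)" unfolding z(2) z(4) by (simp add: field_simps power_add)
  moreover have "z1 * 2^m + z2 * 2^n \<in> Ztau" using z by (intro Ztau_add Ztau_mul Ztau_pow) auto
  ultimately show ?thesis unfolding Rring_iff by blast
qed

lemma Rring_mul: "x \<in> Rring \<Longrightarrow> y \<in> Rring \<Longrightarrow> x * y \<in> Rring"
proof -
  assume "x \<in> Rring" "y \<in> Rring"
  then obtain z1 n z2 m where z: "z1 \<in> Ztau" "x = z1 / 2^n" "z2 \<in> Ztau" "y = z2 / 2^m"
    unfolding Rring_iff by blast
  have "x * y = (z1 * z2) / 2^(n+m)" unfolding z(2) z(4) by (simp add: power_add)
  moreover have "z1 * z2 \<in> Ztau" using z by (intro Ztau_mul)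
  ultimately show ?thesis unfolding Rring_iff by blast
qed

lemma Rring_of_Ztau_div: "z \<in> Ztau \<Longrightarrow> z / 2^n \<in> Rring"
  unfolding Rring_iff by blast

lemma Rring_uminus: "x \<in> Rring \<Longrightarrow> - x \<in> Rring"
  using Rring_mul[of "-1" x] Ztau_Rring[OF Ztau_uminus[OF Ztau_1]] by simp

lemma Rring_sub: "x \<in> Rring \<Longrightarrow> y \<in> Rring \<Longrightarrow> x - y \<in> Rring"
  using Rring_add[of x "-y"] Rring_uminus by simp

lemma Rring_half: "1/2 \<in> Rring"
  using Rring_of_Ztau_div[OF Ztau_1, of 1] by simp

lemma Rring_tau: "tau \<in> Rring" by (rule Ztau_Rring) simp
lemma Rring_tau': "tau' \<in> Rring" unfolding tau'_eq by (rule Ztau_Rring, rule Ztau_sub) simp_all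

lemma Rring_inner: "(\<forall>i. x$i \<in> Rring) \<Longrightarrow> (\<forall>i. y$i \<in> Rring) \<Longrightarrow> (x::real^4) \<bullet> y \<in> Rring"
  unfolding inner4 by (intro Rring_add Rring_mul) auto

lemma Rring_pow2: "r \<in> Rring \<Longrightarrow> \<exists>n. \<forall>m\<ge>n. 2^m * r \<in> Ztau"
proof -
  assume "r \<in> Rring"
  then obtain z n where z: "z \<in> Ztau" "r = z / 2^n" unfolding Rring_iff by blast
  have "2^m * r \<in> Ztau" if "m \<ge> n" for m
  proof -
    have "2^m * r = 2^(m-n) * z" using z that by (simp add: power_diff field_simps)
    then show ?thesis using z by (simp add: Ztau_mul Ztau_pow)
  qed
  then show ?thesis by blast
qed

lemma Rring_O4: assumes "\<forall>i. (x::real^4)$i \<in> Rring" shows "\<exists>k. O4 (2^k *\<^sub>R x)"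
proof -
  obtain n1 where n1: "\<forall>m\<ge>n1. 2^m * x$1 \<in> Ztau" using Rring_pow2 assms by blast
  obtain n2 where n2: "\<forall>m\<ge>n2. 2^m * x$2 \<in> Ztau" using Rring_pow2 assms by blast
  obtain n3 where n3: "\<forall>m\<ge>n3. 2^m * x$3 \<in> Ztau" using Rring_pow2 assms by blast
  obtain n4 where n4: "\<forall>m\<ge>n4. 2^m * x$4 \<in> Ztau" using Rring_pow2 assms by blast
  have "O4 (2^(n1+n2+n3+n4) *\<^sub>R x)"
    unfolding O4_def forall_4 using n1 n2 n3 n4 by simp
  then show ?thesis by blast
qed

lemma tau_sq_sum: "tau * tau + tau' * tau' = 3"
  unfolding tau'_eq using tau_sq by (simp add: algebra_simps)

lemma DeltaGen_props:
  assumes t: "t * t + t' * t' = 3" "t \<in> Rring" "t' \<in> Rring" and x: "x \<in> DeltaGen t t'"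
  shows "x \<bullet> x = 1 \<and> (\<forall>i. x$i \<in> Rring)"
proof -
  have R01: "(0::real) \<in> Rring" "(1::real) \<in> Rring" "-1 \<in> Rring"
    using Ztau_Rring[OF Ztau_0] Ztau_Rring[OF Ztau_1] Rring_uminus[OF Ztau_Rring[OF Ztau_1]] by auto
  from x consider (A) i s where "s \<in> {-1,1}" "x = (\<chi> j. if j = i then s else 0)"
    | (B) "\<forall>j. x $ j \<in> {-1/2, 1/2}"
    | (C) p s where "p permutes (UNIV :: 4 set)" "\<forall>j. s j \<in> {-1::real, 1}"
        "x = (\<chi> j. s j * ((vector [0, 1/2, t'/2, t/2] :: real^4) $ p j))"
    unfolding DeltaGen_def by blast
  then show ?thesis
  proof cases
    case (A i s)
    have "x \<bullet> x = (\<Sum>j\<in>UNIV. (if j = i then s * s else 0))"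
      unfolding A(2) inner_vec_def by (intro sum.cong) auto
    also have "\<dots> = s * s" by simp
    also have "\<dots> = 1" using A(1) by auto
    finally show ?thesis using A R01 by auto
  next
    case B
    have sq: "x$j * x$j = 1/4" for j
    proof -
      from B have "x$j = -1/2 \<or> x$j = 1/2" by auto
      then show ?thesis by (elim disjE) (erule ssubst, simp)+
    qed
    then have "x$1 * x$1 = 1/4" "x$2 * x$2 = 1/4" "x$3 * x$3 = 1/4" "x$4 * x$4 = 1/4" by auto
    then have "x \<bullet> x = 1" unfolding inner4 by simp
    moreover have "\<forall>i. x$i \<in> Rring"
    proof
      fix i
      from B have "x$i = -1/2 \<or> x$i = 1/2" by auto
      then show "x$i \<in> Rring" using Rring_half Rring_uminus[OF Rring_half]
        by (elim disjE) (erule ssubst, simp)+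
    qed
    ultimately show ?thesis by blast
  next
    case (C p s)
    define v where "v = (vector [0, 1/2, t'/2, t/2] :: real^4)"
    have xj: "x$j = s j * v$(p j)" for j unfolding C(3) v_def by simp
    have ss: "s j * s j = 1" for j
    proof -
      from C(2) have "s j = -1 \<or> s j = 1" by auto
      then show ?thesis by auto
    qed
    have comp: "x$j * x$j = v$(p j) * v$(p j)" for j
    proof -
      have "x$j * x$j = (s j * s j) * (v$(p j) * v$(p j))" unfolding xj by (simp only: mult_ac)
      then show ?thesis using ss[of j] by simp
    qed
    have "x \<bullet> x = (\<Sum>j\<in>UNIV. (\<lambda>k. v$k * v$k) (p j))"
      unfolding inner_vec_def inner_real_def using comp by simp
    also have "\<dots> = (\<Sum>k\<in>UNIV. v$k * v$k)"
      using sum.permute[OF C(1), of "\<lambda>k. v$k * v$k"] by (simp add: comp_def)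
    also have "\<dots> = (t*t + t'*t' + 1) / 4" unfolding v_def sum_4 by (simp add: field_simps)
    also have "\<dots> = 1" using t(1) by simp
    finally have n: "x \<bullet> x = 1" .
    have vR: "v$k \<in> Rring" for k
    proof -
      have "v$1 \<in> Rring" "v$2 \<in> Rring" "v$3 \<in> Rring" "v$4 \<in> Rring"
        unfolding v_def using R01 Rring_half t(2,3) Rring_mul[OF t(3) Rring_half] Rring_mul[OF t(2) Rring_half]
        by auto
      then show ?thesis using exhaust_4[of k] by auto
    qed
    have sR: "s j \<in> Rring" for j
    proof -
      from C(2) have "s j = -1 \<or> s j = 1" by auto
      then show ?thesis using R01 by auto
    qed
    have "\<forall>i. x$i \<in> Rring"
    proof
      fix i show "x$i \<in> Rring" unfolding xj by (rule Rring_mul[OF sR vR])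
    qed
    with n show ?thesis by blast
  qed
qed

lemma Delta_props: "a \<in> Delta \<union> Delta' \<Longrightarrow> a \<bullet> a = 1 \<and> (\<forall>i. a$i \<in> Rring)"
  unfolding Delta_def Delta'_def
  using DeltaGen_props[OF tau_sq_sum Rring_tau Rring_tau'] 
    DeltaGen_props[OF tau_sq_sum[unfolded add.commute[of "tau*tau"]] Rring_tau' Rring_tau] by blast

subsection \<open>Reflections\<close>

lemma refl_refl: "a \<bullet> a = 1 \<Longrightarrow> refl a (refl a x) = x"
  unfolding refl_def by (simp add: inner_diff_left algebra_simps)

lemma refl_norm: "a \<bullet> a = 1 \<Longrightarrow> refl a x \<bullet> refl a x = x \<bullet> x"
  unfolding refl_def by (simp add: inner_diff_left inner_diff_right inner_commute algebra_simps)

lemma refl_R: "(\<forall>i. a$i \<in> Rring) \<Longrightarrow> (\<forall>i. x$i \<in> Rring) \<Longrightarrow> (\<forall>i. refl a x $ i \<in> Rring)"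
proof -
  assume a: "\<forall>i. a$i \<in> Rring" and x: "\<forall>i. x$i \<in> Rring"
  have "x \<bullet> a \<in> Rring" using Rring_inner[OF x a] .
  moreover have "(2::real) \<in> Rring" by (rule Ztau_Rring) simp
  ultimately show ?thesis unfolding refl_def using a x by (auto intro!: Rring_sub Rring_mul)
qed

lemma Hinf_props: "w \<in> Hinf \<Longrightarrow> x \<bullet> x = 1 \<Longrightarrow> (\<forall>i. x$i \<in> Rring) \<Longrightarrow> w x \<bullet> w x = 1 \<and> (\<forall>i. w x $ i \<in> Rring)"
proof (induction rule: Hinf.induct)
  case Hinf_id then show ?case by simp
next
  case (Hinf_step w a)
  then have "w x \<bullet> w x = 1" "\<forall>i. w x $ i \<in> Rring" by auto
  then show ?case using Delta_props[OF Hinf_step.hyps(2)] refl_norm refl_R by simp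
qed

lemma Sigma_refl: "x \<in> Sigma \<Longrightarrow> a \<in> Delta \<union> Delta' \<Longrightarrow> refl a x \<in> Sigma"
proof -
  assume x: "x \<in> Sigma" and a: "a \<in> Delta \<union> Delta'"
  then obtain w c where wc: "x = w c" "w \<in> Hinf" "c \<in> Delta \<union> Delta'" unfolding Sigma_def by blast
  have "refl a x = (refl a \<circ> w) c \<and> refl a \<circ> w \<in> Hinf \<and> c \<in> Delta \<union> Delta'"
    using wc a Hinf_step by simp
  then show ?thesis unfolding Sigma_def by blast
qed

lemma Delta_Sigma: "a \<in> Delta \<union> Delta' \<Longrightarrow> a \<in> Sigma"
proof -
  assume a: "a \<in> Delta \<union> Delta'"
  have "a = id a \<and> id \<in> Hinf \<and> a \<in> Delta \<union> Delta'" using a Hinf_id by simp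
  then show ?thesis unfolding Sigma_def by blast
qed

subsection \<open>Descent\<close>

lemma norm_scaled: "x \<bullet> x = 1 \<Longrightarrow> ((2^Suc k *\<^sub>R x) \<bullet> (2^Suc k *\<^sub>R x)) / 4 \<in> Ztau"
proof -
  assume "x \<bullet> x = 1"
  then have "((2^Suc k *\<^sub>R x) \<bullet> (2^Suc k *\<^sub>R x)) / 4 = (2::real)^k * 2^k" by simp
  then show ?thesis by (simp add: Ztau_mul Ztau_pow)
qed

lemma refl_scaled:
  "(2^n *\<^sub>R x) - (((2^n *\<^sub>R x) \<bullet> (2 *\<^sub>R a)) / 2) *\<^sub>R (2 *\<^sub>R a) = 2^n *\<^sub>R refl a x"
  unfolding refl_def by (simp add: algebra_simps)

lemma step':
  assumes "O4 (2^Suc k *\<^sub>R x)" "x \<bullet> x = 1" "\<not> O4 ((1/2) *\<^sub>R (2^Suc k *\<^sub>R x))"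
  shows "\<exists>a\<in>Delta \<union> Delta'. O4 (2^k *\<^sub>R refl a x) \<or>
     (\<not> NS (2^Suc k *\<^sub>R x) \<and> O4 (2^Suc k *\<^sub>R refl a x) \<and> NS (2^Suc k *\<^sub>R refl a x))"
proof -
  obtain b where b: "b \<in> set allB" and d: "O4 ((1/2) *\<^sub>R ((2^Suc k *\<^sub>R x) - (((2^Suc k *\<^sub>R x) \<bullet> rvec b) / 2) *\<^sub>R rvec b)) \<or>
     (\<not> NS (2^Suc k *\<^sub>R x) \<and> O4 ((2^Suc k *\<^sub>R x) - (((2^Suc k *\<^sub>R x) \<bullet> rvec b) / 2) *\<^sub>R rvec b) \<and>
       NS ((2^Suc k *\<^sub>R x) - (((2^Suc k *\<^sub>R x) \<bullet> rvec b) / 2) *\<^sub>R rvec b))"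
    using step[OF assms(1) norm_scaled[OF assms(2)] assms(3)] by blast
  define a where "a = (1/2) *\<^sub>R rvec b"
  have aD: "a \<in> Delta \<union> Delta'" unfolding a_def using allB_Delta[OF b] .
  have rb: "rvec b = 2 *\<^sub>R a" unfolding a_def by simp
  have e: "(2^Suc k *\<^sub>R x) - (((2^Suc k *\<^sub>R x) \<bullet> rvec b) / 2) *\<^sub>R rvec b = 2^Suc k *\<^sub>R refl a x"
    unfolding rb by (rule refl_scaled)
  have h: "(1/2) *\<^sub>R (2^Suc k *\<^sub>R v) = 2^k *\<^sub>R v" for v :: "real^4" by simp
  show ?thesis using d aD unfolding e h by blast
qed

lemma NS_not_half: "NS y \<Longrightarrow> \<not> O4 ((1/2) *\<^sub>R y)"
proof
  assume "NS y" "O4 ((1/2) *\<^sub>R y)"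
  then have "O4 ((1/2) *\<^sub>R (y - 0 *\<^sub>R rvec onesv))" by simp
  then show False using \<open>NS y\<close> Ztau_0 unfolding NS_def by blast
qed

lemma descent: "O4 (2^k *\<^sub>R x) \<Longrightarrow> x \<bullet> x = 1 \<Longrightarrow> x \<in> Sigma"
proof (induction k arbitrary: x)
  case 0
  then have "x \<in> S0" using unit_O4 by simp
  then show ?case using S0_Delta Delta_Sigma by blast
next
  case (Suc k)
  show ?case
  proof (cases "O4 ((1/2) *\<^sub>R (2^Suc k *\<^sub>R x))")
    case True
    then have "O4 (2^k *\<^sub>R x)" by simp
    then show ?thesis using Suc.IH Suc.prems(2) by blast
  next
    case False
    obtain a where aD: "a \<in> Delta \<union> Delta'" and d: "O4 (2^k *\<^sub>R refl a x) \<or>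
       (\<not> NS (2^Suc k *\<^sub>R x) \<and> O4 (2^Suc k *\<^sub>R refl a x) \<and> NS (2^Suc k *\<^sub>R refl a x))"
      using step'[OF Suc.prems False] by blast
    have aa: "a \<bullet> a = 1" using Delta_props[OF aD] by blast
    have x1n: "refl a x \<bullet> refl a x = 1" using refl_norm[OF aa] Suc.prems(2) by simp
    have bk: "x \<in> Sigma" if "refl a x \<in> Sigma"
    proof -
      have "refl a (refl a x) \<in> Sigma" by (rule Sigma_refl[OF that aD])
      then show ?thesis using refl_refl[OF aa] by simp
    qed
    from d show ?thesis
    proof
      assume "O4 (2^k *\<^sub>R refl a x)"
      then show ?thesis using Suc.IH x1n bk by blast
    next
      assume d2: "\<not> NS (2^Suc k *\<^sub>R x) \<and> O4 (2^Suc k *\<^sub>R refl a x) \<and> NS (2^Suc k *\<^sub>R refl a x)"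
      obtain a' where aD': "a' \<in> Delta \<union> Delta'" and d': "O4 (2^k *\<^sub>R refl a' (refl a x)) \<or>
         (\<not> NS (2^Suc k *\<^sub>R refl a x) \<and> O4 (2^Suc k *\<^sub>R refl a' (refl a x)) \<and> NS (2^Suc k *\<^sub>R refl a' (refl a x)))"
        using step'[OF conjunct1[OF conjunct2[OF d2]] x1n NS_not_half[OF conjunct2[OF conjunct2[OF d2]]]] by blast
      have aa': "a' \<bullet> a' = 1" using Delta_props[OF aD'] by blast
      have "O4 (2^k *\<^sub>R refl a' (refl a x))" using d' d2 by blast
      moreover have "refl a' (refl a x) \<bullet> refl a' (refl a x) = 1" using refl_norm[OF aa'] x1n by simp
      ultimately have "refl a' (refl a x) \<in> Sigma" using Suc.IH by blast
      then have "refl a' (refl a' (refl a x)) \<in> Sigma" by (rule Sigma_refl[OF _ aD'])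
      then have "refl a x \<in> Sigma" using refl_refl[OF aa'] by simp
      then show ?thesis using bk by blast
    qed
  qed
qed

lemma inS: "O4 (2^k *\<^sub>R x) \<Longrightarrow> x \<bullet> x = 1 \<Longrightarrow> \<exists>n. x \<in> S n \<union> S' n"
proof (induction k arbitrary: x)
  case 0
  then have "x \<in> S0" using unit_O4 by simp
  then have "x \<in> S 0" unfolding S_def SGen_def by simp
  then show ?case by blast
next
  case (Suc k)
  show ?case
  proof (cases "O4 ((1/2) *\<^sub>R (2^Suc k *\<^sub>R x))")
    case True
    then have "O4 (2^k *\<^sub>R x)" by simp
    then show ?thesis using Suc.IH Suc.prems(2) by blast
  next
    case False
    have c: "\<forall>i. 2^Suc k * x$i \<in> Ztau" using Suc.prems(1) unfolding O4_def by simp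
    from classify[OF Suc.prems(1) norm_scaled[OF Suc.prems(2)] False]
    have "x \<in> S (Suc k) \<or> x \<in> S' (Suc k)"
      unfolding S_def S'_def SGen_def using c Suc.prems(2) by simp
    then show ?thesis by blast
  qed
qed

lemma S_sphere: "x \<in> S n \<union> S' n \<Longrightarrow> x \<bullet> x = 1 \<and> (\<forall>i. x$i \<in> Rring)"
proof -
  assume x: "x \<in> S n \<union> S' n"
  show ?thesis
  proof (cases "n = 0")
    case True
    then have "x \<in> S0" using x unfolding S_def S'_def SGen_def by auto
    then show ?thesis using S0_Delta Delta_props by blast
  next
    case False
    then have h: "(\<forall>i. 2 ^ n * x $ i \<in> Ztau) \<and> x \<bullet> x = 1"
      using x unfolding S_def S'_def SGen_def by auto
    have "x$i \<in> Rring" for i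
    proof -
      have "x$i = (2^n * x$i) / 2^n" by simp
      moreover have "(2^n * x$i) / 2^n \<in> Rring" using Rring_of_Ztau_div h by blast
      ultimately show ?thesis by simp
    qed
    then show ?thesis using h by blast
  qed
qed

theorem mainTheorem6:
  shows "Sigma = (\<Union>n. S n \<union> S' n) \<and>
         (\<Union>n. S n \<union> S' n) = sphere 0 1 \<inter> {x :: real^4. \<forall>i. x $ i \<in> Rring}"
proof -
  let ?SR = "sphere 0 1 \<inter> {x :: real^4. \<forall>i. x $ i \<in> Rring}"
  have SR: "x \<in> ?SR \<longleftrightarrow> x \<bullet> x = 1 \<and> (\<forall>i. x$i \<in> Rring)" for x
    by (simp add: norm_eq_1)
  have 1: "Sigma \<subseteq> ?SR"
  proof
    fix x assume "x \<in> Sigma"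
    then obtain w a where wa: "x = w a" "w \<in> Hinf" "a \<in> Delta \<union> Delta'" unfolding Sigma_def by blast
    have ap: "a \<bullet> a = 1" "\<forall>i. a$i \<in> Rring" using Delta_props[OF wa(3)] by auto
    have "x \<bullet> x = 1 \<and> (\<forall>i. x$i \<in> Rring)"
      unfolding wa(1) by (rule Hinf_props[OF wa(2) ap])
    then show "x \<in> ?SR" unfolding SR .
  qed
  have 2: "?SR \<subseteq> Sigma"
  proof
    fix x assume "x \<in> ?SR"
    then have h: "x \<bullet> x = 1" "\<forall>i. x$i \<in> Rring" unfolding SR by auto
    obtain k where "O4 (2^k *\<^sub>R x)" using Rring_O4[OF h(2)] by blast
    then show "x \<in> Sigma" using descent h(1) by blast
  qed
  have 3: "(\<Union>n. S n \<union> S' n) \<subseteq> ?SR"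
  proof
    fix x assume "x \<in> (\<Union>n. S n \<union> S' n)"
    then obtain n where "x \<in> S n \<union> S' n" by blast
    then show "x \<in> ?SR" unfolding SR by (rule S_sphere)
  qed
  have 4: "?SR \<subseteq> (\<Union>n. S n \<union> S' n)"
  proof
    fix x assume "x \<in> ?SR"
    then have h: "x \<bullet> x = 1" "\<forall>i. x$i \<in> Rring" unfolding SR by auto
    obtain k where "O4 (2^k *\<^sub>R x)" using Rring_O4[OF h(2)] by blast
    then obtain n where "x \<in> S n \<union> S' n" using inS h(1) by blast
    then show "x \<in> (\<Union>n. S n \<union> S' n)" by blast
  qed
  have e1: "Sigma = ?SR" using 1 2 by (rule subset_antisym)
  have e2: "(\<Union>n. S n \<union> S' n) = ?SR" using 3 4 by (rule subset_antisym)
  show ?thesis using e1 e2 by simp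
qed

end
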